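(* Let $k$ be an étale cubic algebra over $\mathbb{Q}$ and let $\mathcal{O}\subset\mathcal{O}_k$ be a cubic ring such that the index $f=(\mathcal{O}_k:\mathcal{O})$ is square free. Then there exists a normalized basis $\{1,\omega,\theta\}$ of $\mathcal{O}_k$ with $\omega,\theta\in k^\times$ (invertible elements of $k$) such that $\mathcal{O}=[1,f\omega,\theta]$ and $[f,f\omega,\theta]$ is the conductor of $\mathcal{O}$.
   Context: An étale cubic algebra is a direct sum of number fields of total degree $3$ over $\mathbb{Q}$; $\mathcal{O}_k$ is its maximal order. A $\mathbb{Z}$-basis $\{1,\omega,\theta\}$ of a cubic ring is normalized if $\omega\theta\in\mathbb{Z}$. $[\beta_1,\beta_2,\beta_3]$ denotes the $\mathbb{Z}$-span. The conductor of $\mathcal{O}$ is the largest $\mathcal{O}_k$-ideal contained in $\mathcal{O}$. *)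

theory Defs
  imports Main "HOL-Computational_Algebra.Polynomial" "HOL-Computational_Algebra.Squarefree"
begin

text \<open>A commutative Q-algebra k (ring structure given by the type class, Q-scalar
multiplication given by scale) is an etale cubic algebra: it has dimension 3 over Q and is a
direct sum of fields, i.e. 1 is a sum of nonzero pairwise orthogonal idempotents e each of
which cuts out a field e k (with identity e).  Each factor is then a finite extension of Q,
i.e. a number field, and the degrees add up to 3.\<close>

definition direct_sum_of_fields :: "'k::comm_ring_1 set \<Rightarrow> bool" where
  "direct_sum_of_fields E \<longleftrightarrow>
     finite E \<and> sum id E = 1 \<and>
     (\<forall>e\<in>E. e \<noteq> 0 \<and> e * e = e) \<and>
     (\<forall>e\<in>E. \<forall>e'\<in>E. e \<noteq> e' \<longrightarrow> e * e' = 0) \<and>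
     (\<forall>e\<in>E. \<forall>x. e * x \<noteq> 0 \<longrightarrow> (\<exists>y. (e * x) * (e * y) = e))"

definition etale_cubic_algebra :: "(rat \<Rightarrow> 'k::comm_ring_1 \<Rightarrow> 'k) \<Rightarrow> bool" where
  "etale_cubic_algebra scale \<longleftrightarrow>
     vector_space scale \<and>
     (\<forall>q x y. scale q (x * y) = scale q x * y) \<and>
     vector_space.dim scale (UNIV :: 'k set) = 3 \<and>
     (\<exists>E::'k set. direct_sum_of_fields E)"

definition maximal_order :: "'k::comm_ring_1 set" where
  "maximal_order = {x. \<exists>p :: int poly. lead_coeff p = 1 \<and> poly (map_poly of_int p) x = 0}"

definition zspan3 :: "'k::comm_ring_1 \<Rightarrow> 'k \<Rightarrow> 'k \<Rightarrow> 'k set" where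
  "zspan3 a b c = {of_int x * a + of_int y * b + of_int z * c | x y z. True}"

definition zindep3 :: "'k::comm_ring_1 \<Rightarrow> 'k \<Rightarrow> 'k \<Rightarrow> bool" where
  "zindep3 a b c \<longleftrightarrow>
     (\<forall>x y z. of_int x * a + of_int y * b + of_int z * c = 0 \<longrightarrow> x = 0 \<and> y = 0 \<and> z = 0)"

definition zbasis3 :: "'k::comm_ring_1 set \<Rightarrow> 'k \<Rightarrow> 'k \<Rightarrow> 'k \<Rightarrow> bool" where
  "zbasis3 M a b c \<longleftrightarrow> M = zspan3 a b c \<and> zindep3 a b c"

definition subring1 :: "'k::comm_ring_1 set \<Rightarrow> bool" where
  "subring1 R \<longleftrightarrow> 1 \<in> R \<and> (\<forall>x\<in>R. \<forall>y\<in>R. x + y \<in> R \<and> x - y \<in> R \<and> x * y \<in> R)"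

definition cubic_ring :: "'k::comm_ring_1 set \<Rightarrow> bool" where
  "cubic_ring R \<longleftrightarrow> subring1 R \<and> (\<exists>a b c. zbasis3 R a b c)"

definition group_index :: "'k::comm_ring_1 set \<Rightarrow> 'k set \<Rightarrow> nat" where
  "group_index M N = card ((\<lambda>x. (\<lambda>n. x + n) ` N) ` M)"

definition ideal_of :: "'k::comm_ring_1 set \<Rightarrow> 'k set \<Rightarrow> bool" where
  "ideal_of R I \<longleftrightarrow> I \<subseteq> R \<and> 0 \<in> I \<and> (\<forall>x\<in>I. \<forall>y\<in>I. x + y \<in> I \<and> x - y \<in> I) \<and>
     (\<forall>x\<in>I. \<forall>r\<in>R. r * x \<in> I)"

definition is_conductor :: "'k::comm_ring_1 set \<Rightarrow> 'k set \<Rightarrow> 'k set \<Rightarrow> bool" where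
  "is_conductor R S C \<longleftrightarrow> ideal_of R C \<and> C \<subseteq> S \<and> (\<forall>I. ideal_of R I \<and> I \<subseteq> S \<longrightarrow> I \<subseteq> C)"

end

theory Submission
  imports Defs "Jordan_Normal_Form.Char_Poly"
begin

lemma det_trick:
  fixes x :: "'k::comm_ring_1" and g :: "nat \<Rightarrow> 'k"
  assumes one: "1 = (\<Sum>i<n. of_int (c i) * g i)"
    and mul: "\<And>i. i < n \<Longrightarrow> x * g i = (\<Sum>j<n. of_int (A i j) * g j)"
  shows "\<exists>p::int poly. lead_coeff p = 1 \<and> poly (map_poly of_int p) x = 0"
proof -
  define Ai :: "int mat" where "Ai = mat n n (\<lambda>(i,j). A i j)"
  define Ak :: "'k mat" where "Ak = map_mat of_int Ai"
  define B :: "'k mat" where "B = x \<cdot>\<^sub>m 1\<^sub>m n - Ak"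
  define v where "v = vec n g"
  have Ai: "Ai \<in> carrier_mat n n" unfolding Ai_def by simp
  have Ak: "Ak \<in> carrier_mat n n" unfolding Ak_def using Ai by simp
  have B: "B \<in> carrier_mat n n" unfolding B_def using Ak by (intro minus_carrier_mat) auto
  have v: "v \<in> carrier_vec n" unfolding v_def by simp
  have Bv: "B *\<^sub>v v = 0\<^sub>v n"
  proof (rule eq_vecI)
    fix i assume i: "i < dim_vec (0\<^sub>v n :: 'k vec)"
    hence i: "i < n" by simp
    have "(B *\<^sub>v v) $ i = (\<Sum>j<n. B $$ (i,j) * g j)"
      using B i unfolding mult_mat_vec_def scalar_prod_def v_def
      by (auto simp: atLeast0LessThan intro!: sum.cong)
    also have "\<dots> = (\<Sum>j<n. (if i = j then x * g j else 0) - of_int (A i j) * g j)"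
      using i unfolding B_def Ak_def Ai_def by (auto intro!: sum.cong simp: algebra_simps)
    also have "\<dots> = x * g i - (\<Sum>j<n. of_int (A i j) * g j)"
      using i by (simp add: sum_subtractf sum.delta')
    also have "\<dots> = 0" using mul[OF i] by simp
    finally show "(B *\<^sub>v v) $ i = 0\<^sub>v n $ i" using i by simp
  qed (use B in auto)
  have "(adj_mat B * B) *\<^sub>v v = adj_mat B *\<^sub>v (B *\<^sub>v v)"
    using B v adj_mat(1)[OF B] by (simp add: assoc_mult_mat_vec)
  also have "\<dots> = 0\<^sub>v n" unfolding Bv using adj_mat(1)[OF B]
    by (intro eq_vecI) (auto simp: mult_mat_vec_def)
  finally have "(det B \<cdot>\<^sub>m 1\<^sub>m n) *\<^sub>v v = 0\<^sub>v n" using adj_mat(3)[OF B] by simp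
  note dv = this
  have dg: "det B * g i = 0" if i: "i < n" for i
  proof -
    have "((det B \<cdot>\<^sub>m 1\<^sub>m n) *\<^sub>v v) $ i = 0" using dv i by simp
    also have "((det B \<cdot>\<^sub>m 1\<^sub>m n) *\<^sub>v v) $ i = (\<Sum>ia = 0..<n. det B * (if ia = i then 1 else 0) * g ia)"
      using i unfolding mult_mat_vec_def scalar_prod_def v_def by (auto intro!: sum.cong)
    also have "\<dots> = (\<Sum>ia = 0..<n. if ia = i then det B * g ia else 0)" by (rule sum.cong) auto
    finally show ?thesis using i by (simp add: sum.delta')
  qed
  have "det B = det B * 1" by simp
  also have "\<dots> = (\<Sum>i<n. of_int (c i) * (det B * g i))"
    unfolding one by (simp add: sum_distrib_left algebra_simps)
  also have "\<dots> = 0" using dg by simp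
  finally have d0: "det B = 0" .
  have "poly (char_poly Ak) x = det B"
    unfolding char_poly_def
    by (rule poly_det_cong[OF B], insert Ak, auto simp: char_poly_matrix_def B_def)
  also have "char_poly Ak = map_poly of_int (char_poly Ai)"
    unfolding Ak_def by (rule of_int_hom.char_poly_hom[OF Ai])
  finally have r: "poly (map_poly of_int (char_poly Ai)) x = 0" using d0 by simp
  from degree_monic_char_poly[OF Ai] have "lead_coeff (char_poly Ai) = 1" by simp
  with r show ?thesis by blast
qed

definition intg :: "'k::comm_ring_1 \<Rightarrow> bool" where
  "intg x \<longleftrightarrow> (\<exists>p::int poly. lead_coeff p = 1 \<and> poly (map_poly of_int p) x = 0)"

definition zsp :: "'i set \<Rightarrow> ('i \<Rightarrow> 'k::comm_ring_1) \<Rightarrow> 'k set" where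
  "zsp I g = {\<Sum>i\<in>I. of_int (c i) * g i | c. True}"

lemma det_trick_set:
  fixes x :: "'k::comm_ring_1" and g :: "'i \<Rightarrow> 'k"
  assumes fin: "finite I" and one: "1 \<in> zsp I g" and mul: "\<And>i. i \<in> I \<Longrightarrow> x * g i \<in> zsp I g"
  shows "intg x"
proof -
  obtain h where h: "bij_betw h {0..<card I} I" using ex_bij_betw_nat_finite[OF fin] by blast
  define n where "n = card I"
  have reidx: "(\<Sum>i\<in>I. of_int (c i) * g i) = (\<Sum>j<n. of_int (c (h j)) * g (h j))" for c
    unfolding n_def atLeast0LessThan[symmetric]
    by (rule sum.reindex_bij_betw[OF h, symmetric])
  from one obtain c where c: "1 = (\<Sum>i\<in>I. of_int (c i) * g i)" unfolding zsp_def by blast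
  have "\<forall>j. \<exists>a. j < n \<longrightarrow> x * g (h j) = (\<Sum>i\<in>I. of_int (a i) * g i)"
  proof
    fix j show "\<exists>a. j < n \<longrightarrow> x * g (h j) = (\<Sum>i\<in>I. of_int (a i) * g i)"
    proof (cases "j < n")
      case True
      hence "h j \<in> I" using h unfolding n_def bij_betw_def by auto
      from mul[OF this] show ?thesis unfolding zsp_def by blast
    qed auto
  qed
  then obtain a where a: "\<And>j. j < n \<Longrightarrow> x * g (h j) = (\<Sum>i\<in>I. of_int (a j i) * g i)"
    by metis
  have "\<exists>p::int poly. lead_coeff p = 1 \<and> poly (map_poly of_int p) x = 0"
    by (rule det_trick[where n=n and c="\<lambda>j. c (h j)" and g="\<lambda>j. g (h j)" and A="\<lambda>j j'. a j (h j')"])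
       (use c a reidx in auto)
  thus ?thesis unfolding intg_def .
qed

lemma zsp_0: "0 \<in> zsp I g"
  unfolding zsp_def by (rule CollectI, rule exI[of _ "\<lambda>_. 0"]) simp

lemma zsp_add: assumes "u \<in> zsp I g" "v \<in> zsp I g" shows "u + v \<in> zsp I g"
proof -
  obtain c d where "u = (\<Sum>i\<in>I. of_int (c i) * g i)" "v = (\<Sum>i\<in>I. of_int (d i) * g i)"
    using assms unfolding zsp_def by blast
  hence "u + v = (\<Sum>i\<in>I. of_int (c i + d i) * g i)" by (simp add: sum.distrib algebra_simps)
  thus ?thesis unfolding zsp_def by (auto intro!: exI[of _ "\<lambda>i. c i + d i"])
qed

lemma zsp_smult: assumes "u \<in> zsp I g" shows "of_int m * u \<in> zsp I g"
proof -
  obtain c where "u = (\<Sum>i\<in>I. of_int (c i) * g i)" using assms unfolding zsp_def by blast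
  hence "of_int m * u = (\<Sum>i\<in>I. of_int (m * c i) * g i)" by (simp add: sum_distrib_left algebra_simps)
  thus ?thesis unfolding zsp_def by (auto intro!: exI[of _ "\<lambda>i. m * c i"])
qed

lemma zsp_neg: assumes "u \<in> zsp I g" shows "- u \<in> zsp I g"
  using zsp_smult[OF assms, of "-1"] by simp

lemma zsp_sum: assumes "finite F" "\<And>j. j \<in> F \<Longrightarrow> f j \<in> zsp I g" shows "sum f F \<in> zsp I g"
  using assms by (induction F rule: finite_induct) (auto intro: zsp_0 zsp_add)

lemma zsp_gen: assumes "finite I" "i \<in> I" shows "g i \<in> zsp I g"
proof -
  have "(\<Sum>j\<in>I. of_int (if j = i then 1 else 0) * g j) = (\<Sum>j\<in>I. if j = i then g j else 0)"
    by (rule sum.cong) auto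
  also have "\<dots> = g i" using assms by (simp add: sum.delta')
  finally show ?thesis unfolding zsp_def by (auto intro!: exI[of _ "\<lambda>j. if j = i then 1 else 0"])
qed

lemma poly_of_int_sum:
  "poly (map_poly (of_int :: int \<Rightarrow> 'k::comm_ring_1) p) x = (\<Sum>i\<le>degree p. of_int (coeff p i) * x ^ i)"
proof -
  have "poly (map_poly (of_int :: int \<Rightarrow> 'k) p) x = (\<Sum>i\<le>degree (map_poly (of_int :: int \<Rightarrow> 'k) p). coeff (map_poly (of_int :: int \<Rightarrow> 'k) p) i * x ^ i)"
    by (rule poly_altdef)
  also have "\<dots> = (\<Sum>i\<le>degree p. coeff (map_poly (of_int :: int \<Rightarrow> 'k) p) i * x ^ i)"
  proof (rule sum.mono_neutral_left)
    show "\<forall>i\<in>{..degree p} - {..degree (map_poly (of_int :: int \<Rightarrow> 'k) p)}. coeff (map_poly (of_int :: int \<Rightarrow> 'k) p) i * x ^ i = 0"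
    proof
      fix i assume "i \<in> {..degree p} - {..degree (map_poly (of_int :: int \<Rightarrow> 'k) p)}"
      hence "\<not> i \<le> degree (map_poly (of_int :: int \<Rightarrow> 'k) p)" by auto
      hence "coeff (map_poly (of_int :: int \<Rightarrow> 'k) p) i = 0" using le_degree by blast
      thus "coeff (map_poly (of_int :: int \<Rightarrow> 'k) p) i * x ^ i = 0" by simp
    qed
  qed (auto simp: degree_map_poly_le)
  finally show ?thesis by (simp add: coeff_map_poly)
qed

lemma monic_rel:
  fixes x :: "'k::comm_ring_1"
  assumes "lead_coeff p = 1" "poly (map_poly of_int p) x = 0"
  shows "x ^ degree p = - (\<Sum>i<degree p. of_int (coeff p i) * x ^ i)"
proof -
  have "0 = (\<Sum>i\<le>degree p. of_int (coeff p i) * x ^ i)" using assms(2) poly_of_int_sum by metis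
  also have "\<dots> = (\<Sum>i<degree p. of_int (coeff p i) * x ^ i) + x ^ degree p"
    using assms(1) by (simp add: lessThan_Suc_atMost[symmetric])
  finally show ?thesis by (simp add: eq_neg_iff_add_eq_0 add.commute)
qed

lemma intg_trivial: assumes "(1::'k::comm_ring_1) = 0" shows "intg (z::'k)"
proof -
  have "z = 0" by (metis assms mult_1 mult_zero_left)
  hence "poly (map_poly of_int [:0, 1:]) z = 0" by simp
  moreover have "lead_coeff [:0::int, 1:] = 1" by simp
  ultimately show ?thesis unfolding intg_def by blast
qed

lemma intg_ring:
  fixes x y :: "'k::comm_ring_1"
  assumes ix: "intg x" and iy: "intg y"
  shows "intg (x + y) \<and> intg (x * y) \<and> intg (- x)"
proof (cases "(1::'k) = 0")
  case True thus ?thesis using intg_trivial by blast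
next
  case nt: False
  obtain p where p: "lead_coeff p = 1" "poly (map_poly of_int p) x = 0" using ix unfolding intg_def by blast
  obtain q where q: "lead_coeff q = 1" "poly (map_poly of_int q) y = 0" using iy unfolding intg_def by blast
  define d where "d = degree p"
  define e where "e = degree q"
  have xd: "x ^ d = - (\<Sum>i<d. of_int (coeff p i) * x ^ i)" using monic_rel[OF p] d_def by simp
  have ye: "y ^ e = - (\<Sum>i<e. of_int (coeff q i) * y ^ i)" using monic_rel[OF q] e_def by simp
  have d0: "d > 0" proof (rule ccontr)
    assume "\<not> d > 0" hence "d = 0" by simp
    with xd have "(1::'k) = 0" by simp
    with nt show False by simp
  qed
  have e0: "e > 0" proof (rule ccontr)
    assume "\<not> e > 0" hence "e = 0" by simp
    with ye have "(1::'k) = 0" by simp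
    with nt show False by simp
  qed
  define I where "I = {0..<d} \<times> {0..<e}"
  define g where "g = (\<lambda>(i,j). x ^ i * y ^ j)"
  define S where "S = zsp I g"
  have finI: "finite I" unfolding I_def by simp
  have base: "x ^ a * y ^ b \<in> S" if "a < d" "b < e" for a b
    using zsp_gen[OF finI, of "(a,b)" g] that unfolding S_def I_def g_def by simp
  have monoA: "x ^ a * y ^ b \<in> S" if b: "b < e" for a b
  proof (induction a rule: less_induct)
    case (less a)
    show ?case
    proof (cases "a < d")
      case True thus ?thesis using base b by simp
    next
      case False
      hence "x ^ a = x ^ (a - d) * x ^ d" by (simp add: power_add[symmetric])
      hence "x ^ a * y ^ b = - (\<Sum>i<d. of_int (coeff p i) * (x ^ (a - d + i) * y ^ b))"
        unfolding xd by (simp add: sum_distrib_left sum_distrib_right power_add algebra_simps sum_negf)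
      also have "\<dots> \<in> S" unfolding S_def
        by (intro zsp_neg zsp_sum zsp_smult) (use less False in \<open>auto simp: S_def\<close>)
      finally show ?thesis .
    qed
  qed
  have mono: "x ^ a * y ^ b \<in> S" for a b
  proof (induction b arbitrary: a rule: less_induct)
    case (less b)
    show ?case
    proof (cases "b < e")
      case True thus ?thesis using monoA by simp
    next
      case False
      hence "y ^ b = y ^ (b - e) * y ^ e" by (simp add: power_add[symmetric])
      hence "x ^ a * y ^ b = - (\<Sum>i<e. of_int (coeff q i) * (x ^ a * y ^ (b - e + i)))"
        unfolding ye by (simp add: sum_distrib_left sum_distrib_right power_add algebra_simps sum_negf)
      also have "\<dots> \<in> S" unfolding S_def
        by (intro zsp_neg zsp_sum zsp_smult) (use less False e0 in \<open>auto simp: S_def\<close>)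
      finally show ?thesis .
    qed
  qed
  have gS: "g i * g j \<in> S" for i j
  proof -
    obtain a b a' b' where "i = (a,b)" "j = (a',b')" by fastforce
    hence "g i * g j = x ^ (a + a') * y ^ (b + b')" unfolding g_def by (simp add: power_add algebra_simps)
    thus ?thesis using mono by simp
  qed
  have mulS: "u * v \<in> S" if uS: "u \<in> S" and vS: "v \<in> S" for u v
  proof -
    obtain c c' where u: "u = (\<Sum>i\<in>I. of_int (c i) * g i)" and v: "v = (\<Sum>i\<in>I. of_int (c' i) * g i)"
      using uS vS unfolding S_def zsp_def by blast
    have "u * v = (\<Sum>i\<in>I. \<Sum>j\<in>I. of_int (c i * c' j) * (g i * g j))"
      unfolding u v sum_product by (simp add: algebra_simps)
    also have "\<dots> \<in> S" unfolding S_def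
      by (intro zsp_sum zsp_smult) (use finI gS in \<open>auto simp: S_def\<close>)
    finally show ?thesis .
  qed
  have xS: "x \<in> S" using mono[of 1 0] by simp
  have yS: "y \<in> S" using mono[of 0 1] by simp
  have oneS: "1 \<in> S" using mono[of 0 0] by simp
  have intS: "intg z" if z: "z \<in> S" for z
  proof (rule det_trick_set[OF finI])
    show "1 \<in> zsp I g" using oneS S_def by simp
    fix i assume "i \<in> I"
    hence "g i \<in> S" using zsp_gen[OF finI] S_def by simp
    thus "z * g i \<in> zsp I g" using mulS z S_def by simp
  qed
  have "x + y \<in> S" using xS yS zsp_add S_def by simp
  moreover have "x * y \<in> S" using mulS xS yS by simp
  moreover have "- x \<in> S" using xS zsp_neg S_def by simp
  ultimately show ?thesis using intS by blast
qed

lemma zspan3_iff: "x \<in> zspan3 a b c \<longleftrightarrow> (\<exists>u v w. x = of_int u * a + of_int v * b + of_int w * c)"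
  unfolding zspan3_def by blast

lemma zindep3_uniq:
  assumes "zindep3 a b c"
    and "of_int u * a + of_int v * b + of_int w * c = of_int u' * a + of_int v' * b + of_int w' * c"
  shows "u = u' \<and> v = v' \<and> w = w'"
proof -
  have "of_int (u - u') * a + of_int (v - v') * b + of_int (w - w') * c = 0"
    using assms(2) by (simp add: algebra_simps)
  with assms(1) show ?thesis unfolding zindep3_def by fastforce
qed

lemma zbasis3_change:
  fixes a b c :: "'k::comm_ring_1"
  assumes B: "zbasis3 S a b c"
    and a': "a' = of_int ma * a + of_int mb * b + of_int mc * c"
    and b': "b' = of_int md * a + of_int me * b + of_int mf * c"
    and c': "c' = of_int mg * a + of_int mh * b + of_int mi * c"
    and D: "D = ma*(me*mi - mf*mh) - mb*(md*mi - mf*mg) + mc*(md*mh - me*mg)"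
    and D1: "D = 1 \<or> D = -1"
  shows "zbasis3 S a' b' c'"
proof -
  have S: "S = zspan3 a b c" and ind: "zindep3 a b c" using B unfolding zbasis3_def by auto
  define C11 where "C11 = me*mi - mf*mh"
  define C12 where "C12 = -(md*mi - mf*mg)"
  define C13 where "C13 = md*mh - me*mg"
  define C21 where "C21 = -(mb*mi - mc*mh)"
  define C22 where "C22 = ma*mi - mc*mg"
  define C23 where "C23 = -(ma*mh - mb*mg)"
  define C31 where "C31 = mb*mf - mc*me"
  define C32 where "C32 = -(ma*mf - mc*md)"
  define C33 where "C33 = ma*me - mb*md"
  have DD: "D * D = 1" using D1 by auto
  have ea: "of_int D * a = of_int C11 * a' + of_int C21 * b' + of_int C31 * c'"
    unfolding a' b' c' D C11_def C21_def C31_def by (simp add: algebra_simps)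
  have eb: "of_int D * b = of_int C12 * a' + of_int C22 * b' + of_int C32 * c'"
    unfolding a' b' c' D C12_def C22_def C32_def by (simp add: algebra_simps)
  have ec: "of_int D * c = of_int C13 * a' + of_int C23 * b' + of_int C33 * c'"
    unfolding a' b' c' D C13_def C23_def C33_def by (simp add: algebra_simps)
  have inv: "x = of_int D * (of_int D * x)" for x :: 'k
    using DD by (metis mult.assoc mult_1 of_int_1 of_int_mult)
  have sub1: "zspan3 a' b' c' \<subseteq> zspan3 a b c"
  proof
    fix x assume "x \<in> zspan3 a' b' c'"
    then obtain u v w where x: "x = of_int u * a' + of_int v * b' + of_int w * c'" unfolding zspan3_iff by blast
    have "x = of_int (u*ma + v*md + w*mg) * a + of_int (u*mb + v*me + w*mh) * b + of_int (u*mc + v*mf + w*mi) * c"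
      unfolding x a' b' c' by (simp add: algebra_simps)
    thus "x \<in> zspan3 a b c" unfolding zspan3_iff by blast
  qed
  have sub2: "zspan3 a b c \<subseteq> zspan3 a' b' c'"
  proof
    fix x assume "x \<in> zspan3 a b c"
    then obtain u v w where x: "x = of_int u * a + of_int v * b + of_int w * c" unfolding zspan3_iff by blast
    have "x = of_int D * (of_int u * (of_int D * a) + of_int v * (of_int D * b) + of_int w * (of_int D * c))"
      by (subst x, subst inv[of "of_int u * a + of_int v * b + of_int w * c"]) (simp add: algebra_simps)
    also have "\<dots> = of_int (D*(u*C11 + v*C12 + w*C13)) * a' + of_int (D*(u*C21 + v*C22 + w*C23)) * b' + of_int (D*(u*C31 + v*C32 + w*C33)) * c'"
      unfolding ea eb ec by (simp add: algebra_simps)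
    finally show "x \<in> zspan3 a' b' c'" unfolding zspan3_iff by blast
  qed
  have ind': "zindep3 a' b' c'"
    unfolding zindep3_def
  proof (intro allI impI)
    fix u v w :: int
    assume "of_int u * a' + of_int v * b' + of_int w * c' = 0"
    hence "of_int (u*ma + v*md + w*mg) * a + of_int (u*mb + v*me + w*mh) * b + of_int (u*mc + v*mf + w*mi) * c = 0"
      unfolding a' b' c' by (simp add: algebra_simps)
    with ind have e1: "u*ma + v*md + w*mg = 0" and e2: "u*mb + v*me + w*mh = 0" and e3: "u*mc + v*mf + w*mi = 0"
      unfolding zindep3_def by blast+
    have "u * D = (u*ma + v*md + w*mg) * C11 + (u*mb + v*me + w*mh) * C12 + (u*mc + v*mf + w*mi) * C13"
      unfolding D C11_def C12_def C13_def by (simp add: algebra_simps)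
    hence "u * D = 0" using e1 e2 e3 by simp
    moreover have "v * D = (u*ma + v*md + w*mg) * C21 + (u*mb + v*me + w*mh) * C22 + (u*mc + v*mf + w*mi) * C23"
      unfolding D C21_def C22_def C23_def by (simp add: algebra_simps)
    hence "v * D = 0" using e1 e2 e3 by simp
    moreover have "w * D = (u*ma + v*md + w*mg) * C31 + (u*mb + v*me + w*mh) * C32 + (u*mc + v*mf + w*mi) * C33"
      unfolding D C31_def C32_def C33_def by (simp add: algebra_simps)
    hence "w * D = 0" using e1 e2 e3 by simp
    ultimately show "u = 0 \<and> v = 0 \<and> w = 0" using D1 by auto
  qed
  show ?thesis unfolding zbasis3_def using S sub1 sub2 ind' by auto
qed

lemma etale_inv:
  fixes scale :: "rat \<Rightarrow> 'k::comm_ring_1 \<Rightarrow> 'k"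
  assumes "etale_cubic_algebra scale" "n \<noteq> 0"
  shows "\<exists>u. of_int n * u = (1::'k)"
proof -
  interpret vector_space scale using assms(1) unfolding etale_cubic_algebra_def by blast
  have nat: "scale (of_nat m) x = of_nat m * x" for m x
    by (induction m) (simp_all add: scale_left_distrib distrib_right)
  have int: "scale (of_int m) x = of_int m * x" for m x
  proof (cases "m \<ge> 0")
    case True
    then obtain k where "m = int k" using nonneg_int_cases by blast
    thus ?thesis using nat by simp
  next
    case False
    define k where "k = nat (- m)"
    have "m = - int k" using False by (simp add: k_def)
    thus ?thesis using nat[of k x] by (simp add: scale_minus_left)
  qed
  have "of_int n * scale (1 / of_int n) 1 = scale (of_int n) (scale (1 / of_int n) 1)" using int[of n] by metis
  also have "\<dots> = scale (of_int n * (1 / of_int n)) 1" by simp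
  also have "\<dots> = 1" using assms(2) by simp
  finally show ?thesis by blast
qed

lemma etale_reduced:
  fixes scale :: "rat \<Rightarrow> 'k::comm_ring_1 \<Rightarrow> 'k"
  assumes "etale_cubic_algebra scale" "w * w = 0"
  shows "w = (0::'k)"
proof -
  obtain E :: "'k set" where E: "direct_sum_of_fields E" using assms(1) unfolding etale_cubic_algebra_def by blast
  have fin: "finite E" and s1: "sum id E = 1" and idem: "\<And>e. e \<in> E \<Longrightarrow> e * e = e"
    and fld: "\<And>e x. e \<in> E \<Longrightarrow> e * x \<noteq> 0 \<Longrightarrow> \<exists>y. (e * x) * (e * y) = e"
    using E unfolding direct_sum_of_fields_def by auto
  have ez: "e * w = 0" if e: "e \<in> E" for e
  proof (rule ccontr)
    assume ne: "e * w \<noteq> 0"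
    then obtain y where y: "(e * w) * (e * y) = e" using fld[OF e] by blast
    have "e * w = e * (e * w)" using idem[OF e] by (simp add: mult.assoc[symmetric])
    also have "\<dots> = ((e * w) * (e * y)) * (e * w)" using y by simp
    also have "\<dots> = (e * e) * (e * y) * (w * w)" by (simp add: algebra_simps)
    also have "\<dots> = 0" using assms(2) by simp
    finally show False using ne by simp
  qed
  have "w = sum id E * w" using s1 by simp
  also have "\<dots> = (\<Sum>e\<in>E. e * w)" by (simp add: sum_distrib_right)
  also have "\<dots> = 0" using ez by simp
  finally show ?thesis .
qed

lemma mo_iff: "x \<in> maximal_order \<longleftrightarrow> intg x"
  unfolding maximal_order_def intg_def by simp

lemma intg_1: "intg (1::'k::comm_ring_1)"
proof -
  have "poly (map_poly of_int [:-1, 1:]) (1::'k) = 0" by simp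
  moreover have "lead_coeff [:-1::int, 1:] = 1" by simp
  ultimately show ?thesis unfolding intg_def by blast
qed

locale cub =
  fixes Ob :: "'k::comm_ring_1 set"
  assumes cr: "cubic_ring Ob" and sub: "Ob \<subseteq> maximal_order"
    and inv: "\<And>n::int. n \<noteq> 0 \<Longrightarrow> \<exists>u::'k. of_int n * u = 1"
    and red: "\<And>w::'k. w * w = 0 \<Longrightarrow> w = 0"
    and sqf: "squarefree (group_index maximal_order Ob)"
begin

abbreviation "L \<equiv> (maximal_order :: 'k set)"

lemma L_add: "x \<in> L \<Longrightarrow> y \<in> L \<Longrightarrow> x + y \<in> L"
  using intg_ring mo_iff by blast
lemma L_mult: "x \<in> L \<Longrightarrow> y \<in> L \<Longrightarrow> x * y \<in> L"
  using intg_ring mo_iff by blast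
lemma L_neg: "x \<in> L \<Longrightarrow> - x \<in> L"
  using intg_ring mo_iff by blast
lemma L_diff: "x \<in> L \<Longrightarrow> y \<in> L \<Longrightarrow> x - y \<in> L"
  using L_add L_neg by (metis diff_conv_add_uminus)
lemma L_1: "1 \<in> L" using intg_1 mo_iff by blast
lemma L_0: "0 \<in> L" using L_diff[OF L_1 L_1] by simp
lemma L_int: "of_int m \<in> L"
proof (induction m rule: int_induct[where k=0])
  case base thus ?case using L_0 by simp
next
  case (step1 i) thus ?case using L_add[OF _ L_1] by simp
next
  case (step2 i) thus ?case using L_diff[OF _ L_1] by simp
qed
lemma L_smult: "x \<in> L \<Longrightarrow> of_int m * x \<in> L"
  using L_mult L_int by blast
lemma L_lc: "x \<in> L \<Longrightarrow> y \<in> L \<Longrightarrow> z \<in> L \<Longrightarrow> of_int u * x + of_int v * y + of_int w * z \<in> L"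
  using L_add L_smult by blast

lemma O_ring: "subring1 Ob" using cr unfolding cubic_ring_def by blast
lemma O_1: "1 \<in> Ob" using O_ring unfolding subring1_def by blast
lemma O_add: "x \<in> Ob \<Longrightarrow> y \<in> Ob \<Longrightarrow> x + y \<in> Ob" using O_ring unfolding subring1_def by blast
lemma O_diff: "x \<in> Ob \<Longrightarrow> y \<in> Ob \<Longrightarrow> x - y \<in> Ob" using O_ring unfolding subring1_def by blast
lemma O_mult: "x \<in> Ob \<Longrightarrow> y \<in> Ob \<Longrightarrow> x * y \<in> Ob" using O_ring unfolding subring1_def by blast
lemma O_0: "0 \<in> Ob" using O_diff[OF O_1 O_1] by simp
lemma O_neg: "x \<in> Ob \<Longrightarrow> - x \<in> Ob" using O_diff[OF O_0] by fastforce
lemma O_int: "of_int m \<in> Ob"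
proof (induction m rule: int_induct[where k=0])
  case base thus ?case using O_0 by simp
next
  case (step1 i) thus ?case using O_add[OF _ O_1] by simp
next
  case (step2 i) thus ?case using O_diff[OF _ O_1] by simp
qed
lemma O_smult: "x \<in> Ob \<Longrightarrow> of_int m * x \<in> Ob"
  using O_mult O_int by blast
lemma O_lc: "x \<in> Ob \<Longrightarrow> y \<in> Ob \<Longrightarrow> z \<in> Ob \<Longrightarrow> of_int u * x + of_int v * y + of_int w * z \<in> Ob"
  using O_add O_smult by blast

lemma obasis: obtains a b c where "zbasis3 Ob a b c" using cr unfolding cubic_ring_def by blast

lemma one_ne_zero: "(1::'k) \<noteq> 0"
proof
  assume h: "(1::'k) = 0"
  obtain a b c where "zbasis3 Ob a b c" using obasis by blast
  hence "zindep3 a b c" unfolding zbasis3_def by blast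
  moreover have "of_int 1 * a + of_int 0 * b + of_int 0 * c = (0::'k)"
    using h by (metis mult_1 mult_zero_left add_0 of_int_1 of_int_0)
  ultimately show False unfolding zindep3_def by fastforce
qed

lemma torsion: "n \<noteq> 0 \<Longrightarrow> of_int n * w = 0 \<Longrightarrow> w = (0::'k)"
  using inv by (metis mult.assoc mult.commute mult_1 mult_zero_right)

lemma of_int_inj: "of_int m = (of_int n :: 'k) \<Longrightarrow> m = n"
proof (rule ccontr)
  assume "of_int m = (of_int n :: 'k)" "m \<noteq> n"
  hence "of_int (m - n) * (1::'k) = 0" "m - n \<noteq> 0" by auto
  with torsion one_ne_zero show False by blast
qed

lemma rat_integral:
  assumes z: "z \<in> L" and N: "N \<noteq> 0" and e: "of_int N * z = of_int m"
  shows "N dvd m"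
proof -
  define g where "g = gcd N m"
  have g0: "g \<noteq> 0" using N unfolding g_def by simp
  obtain N1 where N1: "N = g * N1" unfolding g_def by (meson gcd_dvd1 dvdE)
  obtain m1 where m1: "m = g * m1" unfolding g_def by (meson gcd_dvd2 dvdE)
  have cop: "coprime N1 m1"
    using g0 N1 m1 unfolding g_def by (metis gcd_coprime gcd_mult_left_left_cancel gcd_eq_0_iff mult.commute mult_cancel_left1)
  have "of_int g * (of_int N1 * z - of_int m1) = (0::'k)"
    using e unfolding N1 m1 by (simp add: algebra_simps)
  hence e1: "of_int N1 * z = (of_int m1 :: 'k)" using torsion[OF g0] by (metis right_minus_eq)
  obtain p where p: "lead_coeff p = 1" "poly (map_poly of_int p) z = (0::'k)" using z mo_iff intg_def by blast
  define d where "d = degree p"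
  have "0 = of_int N1 ^ d * (\<Sum>i\<le>d. of_int (coeff p i) * z ^ i :: 'k)"
    using p(2) poly_of_int_sum[of p z] d_def by simp
  also have "\<dots> = (\<Sum>i\<le>d. of_int (coeff p i) * (of_int N1 * z) ^ i * of_int N1 ^ (d - i))"
    unfolding sum_distrib_left
  proof (rule sum.cong[OF refl])
    fix i assume "i \<in> {..d}"
    hence "d = i + (d - i)" by simp
    hence "(of_int N1 :: 'k) ^ d = of_int N1 ^ i * of_int N1 ^ (d - i)" by (metis power_add)
    thus "of_int N1 ^ d * (of_int (coeff p i) * z ^ i) = of_int (coeff p i) * (of_int N1 * z) ^ i * of_int N1 ^ (d - i)"
      by (simp add: power_mult_distrib algebra_simps)
  qed
  also have "\<dots> = of_int (\<Sum>i\<le>d. coeff p i * m1 ^ i * N1 ^ (d - i))" unfolding e1 by simp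
  finally have "(\<Sum>i\<le>d. coeff p i * m1 ^ i * N1 ^ (d - i)) = 0" using of_int_inj by (metis of_int_0)
  also have "(\<Sum>i\<le>d. coeff p i * m1 ^ i * N1 ^ (d - i)) = (\<Sum>i<d. coeff p i * m1 ^ i * N1 ^ (d - i)) + m1 ^ d"
    using p(1) d_def by (simp add: lessThan_Suc_atMost[symmetric])
  finally have "m1 ^ d = - (\<Sum>i<d. coeff p i * m1 ^ i * N1 ^ (d - i))" by simp
  moreover have "N1 dvd (\<Sum>i<d. coeff p i * m1 ^ i * N1 ^ (d - i))"
  proof (rule dvd_sum)
    fix i assume "i \<in> {..<d}"
    hence "N1 dvd N1 ^ (d - i)" by (simp add: dvd_power)
    thus "N1 dvd coeff p i * m1 ^ i * N1 ^ (d - i)" by simp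
  qed
  ultimately have "N1 dvd m1 ^ d" by simp
  moreover have "coprime N1 (m1 ^ d)" using cop by simp
  ultimately have "is_unit N1" by (metis coprime_common_divisor dvd_refl)
  hence "N1 = 1 \<or> N1 = -1" by (simp add: zdvd1_eq, arith)
  thus ?thesis using N1 m1 by auto
qed

end

lemma hnf2:
  fixes P :: "int \<Rightarrow> int \<Rightarrow> bool"
  assumes add: "\<And>a b c d. P a b \<Longrightarrow> P c d \<Longrightarrow> P (a + c) (b + d)"
    and neg: "\<And>a b. P a b \<Longrightarrow> P (-a) (-b)"
    and N: "N > 0" "P N 0" "P 0 N"
  shows "\<exists>d1 d2 x. d1 > 0 \<and> d2 > 0 \<and> P d1 0 \<and> P x d2 \<and> (\<forall>a b. P a b \<longleftrightarrow> (\<exists>i j. a = i*d1 + j*x \<and> b = j*d2))"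
proof -
  have P00: "P 0 0" using add[OF N(2) neg[OF N(2)]] by simp
  have sub: "P (a - c) (b - d)" if "P a b" "P c d" for a b c d
    using add[OF that(1) neg[OF that(2)]] by simp
  have smul: "P (k*a) (k*b)" if p: "P a b" for k a b
  proof (induction k rule: int_induct[where k=0])
    case base thus ?case using P00 by simp
  next
    case (step1 i)
    have "P ((i*a) + a) ((i*b) + b)" using add[OF step1(2) p] by simp
    thus ?case by (simp add: algebra_simps)
  next
    case (step2 i)
    have "P ((i*a) - a) ((i*b) - b)" using sub[OF step2(2) p] by simp
    thus ?case by (simp add: algebra_simps)
  qed
  define S2 where "S2 = {n::nat. n > 0 \<and> (\<exists>a. P a (int n))}"
  have NS2: "nat N \<in> S2" using N unfolding S2_def by auto
  define d2n where "d2n = (LEAST n. n \<in> S2)"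
  have d2S: "d2n \<in> S2" unfolding d2n_def using NS2 by (rule LeastI)
  define d2 where "d2 = int d2n"
  have d2pos: "d2 > 0" using d2S unfolding S2_def d2_def by auto
  obtain x where Px: "P x d2" using d2S unfolding S2_def d2_def by auto
  have dvd2: "d2 dvd b" if "P a b" for a b
  proof -
    define q r where "q = b div d2" and "r = b mod d2"
    have br: "b = q * d2 + r" unfolding q_def r_def by simp
    have r: "0 \<le> r" "r < d2" unfolding r_def using d2pos by auto
    have "P (a - q * x) (b - q * d2)" using sub[OF that smul[OF Px]] .
    hence Pr: "P (a - q * x) r" using br by simp
    have "r = 0"
    proof (rule ccontr)
      assume "r \<noteq> 0"
      hence "nat r \<in> S2" using Pr r unfolding S2_def by auto
      hence "d2n \<le> nat r" unfolding d2n_def by (rule Least_le)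
      thus False using r d2_def by auto
    qed
    thus ?thesis using br by simp
  qed
  define S1 where "S1 = {n::nat. n > 0 \<and> P (int n) 0}"
  have NS1: "nat N \<in> S1" using N unfolding S1_def by auto
  define d1n where "d1n = (LEAST n. n \<in> S1)"
  have d1S: "d1n \<in> S1" unfolding d1n_def using NS1 by (rule LeastI)
  define d1 where "d1 = int d1n"
  have d1pos: "d1 > 0" using d1S unfolding S1_def d1_def by auto
  have Pd1: "P d1 0" using d1S unfolding S1_def d1_def by auto
  have dvd1: "d1 dvd a" if "P a 0" for a
  proof -
    define q r where "q = a div d1" and "r = a mod d1"
    have ar: "a = q * d1 + r" unfolding q_def r_def by simp
    have r: "0 \<le> r" "r < d1" unfolding r_def using d1pos by auto
    have "P (a - q * d1) (0 - q * 0)" using sub[OF that smul[OF Pd1]] .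
    hence Pr: "P r 0" using ar by simp
    have "r = 0"
    proof (rule ccontr)
      assume "r \<noteq> 0"
      hence "nat r \<in> S1" using Pr r unfolding S1_def by auto
      hence "d1n \<le> nat r" unfolding d1n_def by (rule Least_le)
      thus False using r d1_def by auto
    qed
    thus ?thesis using ar by simp
  qed
  have char: "P a b \<longleftrightarrow> (\<exists>i j. a = i*d1 + j*x \<and> b = j*d2)" for a b
  proof
    assume Pab: "P a b"
    obtain j where j: "b = j * d2" using dvd2[OF Pab] by (metis dvdE mult.commute)
    have "P (a - j * x) (b - j * d2)" using sub[OF Pab smul[OF Px]] .
    hence "P (a - j * x) 0" using j by simp
    then obtain i where "a - j * x = i * d1" using dvd1 by (metis dvdE mult.commute)
    thus "\<exists>i j. a = i*d1 + j*x \<and> b = j*d2" using j by (intro exI[of _ i] exI[of _ j]) simp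
  next
    assume "\<exists>i j. a = i*d1 + j*x \<and> b = j*d2"
    then obtain i j where "a = i*d1 + j*x" "b = j*d2" by blast
    thus "P a b" using add[OF smul[OF Pd1, of i] smul[OF Px, of j]] by (simp add: algebra_simps)
  qed
  show ?thesis using d1pos d2pos Pd1 Px char by blast
qed

context cub begin

definition cos :: "'k \<Rightarrow> 'k set" where "cos y = (\<lambda>n. y + n) ` Ob"

lemma cos_eq: "cos y = cos y' \<longleftrightarrow> y - y' \<in> Ob"
proof
  assume h: "cos y = cos y'"
  have "y \<in> cos y" unfolding cos_def using O_0 by (metis add_0_right image_eqI)
  hence "y \<in> cos y'" using h by simp
  then obtain n where "n \<in> Ob" "y = y' + n" unfolding cos_def by blast
  thus "y - y' \<in> Ob" by simp
next
  assume h: "y - y' \<in> Ob"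
  show "cos y = cos y'"
  proof
    show "cos y \<subseteq> cos y'"
    proof
      fix z assume "z \<in> cos y"
      then obtain n where n: "n \<in> Ob" "z = y + n" unfolding cos_def by blast
      hence "z = y' + ((y - y') + n)" by simp
      moreover have "(y - y') + n \<in> Ob" using O_add[OF h n(1)] .
      ultimately show "z \<in> cos y'" unfolding cos_def by blast
    qed
  next
    show "cos y' \<subseteq> cos y"
    proof
      fix z assume "z \<in> cos y'"
      then obtain n where n: "n \<in> Ob" "z = y' + n" unfolding cos_def by blast
      hence "z = y + (n - (y - y'))" by simp
      moreover have "n - (y - y') \<in> Ob" using O_diff[OF n(1) h] .
      ultimately show "z \<in> cos y" unfolding cos_def by blast
    qed
  qed
qed

abbreviation "fN \<equiv> group_index L Ob"

lemma fN_cos: "fN = card (cos ` L)"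
  unfolding group_index_def cos_def by simp

lemma fN_pos: "fN > 0" using sqf by (metis gr0I not_squarefree_0)

lemma fin_cos: "finite (cos ` L)" using fN_pos fN_cos by (metis card.infinite less_irrefl)

lemma denom: "\<exists>N::int. N > 0 \<and> (\<forall>x\<in>L. of_int N * x \<in> Ob)"
proof (intro exI[of _ "fact fN"] conjI ballI)
  show "(fact fN :: int) > 0" by simp
  fix x assume x: "x \<in> L"
  define h where "h = (\<lambda>j::nat. cos (of_nat j * x))"
  have hsub: "h ` {0..fN} \<subseteq> cos ` L"
  proof
    fix z assume "z \<in> h ` {0..fN}"
    then obtain j where "z = cos (of_nat j * x)" unfolding h_def by blast
    moreover have "of_nat j * x \<in> L" using L_smult[OF x, of "int j"] by simp
    ultimately show "z \<in> cos ` L" by blast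
  qed
  have "\<not> inj_on h {0..fN}"
  proof
    assume "inj_on h {0..fN}"
    hence "card (h ` {0..fN}) = Suc fN" by (simp add: card_image)
    moreover have "card (h ` {0..fN}) \<le> fN" using card_mono[OF fin_cos hsub] fN_cos by simp
    ultimately show False by simp
  qed
  then obtain i j where ij: "i \<in> {0..fN}" "j \<in> {0..fN}" "i \<noteq> j" "h i = h j"
    unfolding inj_on_def by blast
  have key: "of_int (int j - int i) * x \<in> Ob" if "i \<in> {0..fN}" "j \<in> {0..fN}" "h i = h j" for i j
  proof -
    have "of_nat i * x - of_nat j * x \<in> Ob" using that(3) cos_eq unfolding h_def by blast
    hence "- (of_nat i * x - of_nat j * x) \<in> Ob" by (rule O_neg)
    thus ?thesis by (simp add: algebra_simps)
  qed
  obtain d where d: "of_int (int d) * x \<in> Ob" "1 \<le> d" "d \<le> fN"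
  proof (cases "i < j")
    case True
    have "of_int (int (j - i)) * x \<in> Ob" using key[OF ij(1,2,4)] True by (simp add: of_nat_diff)
    thus ?thesis using that[of "j - i"] True ij by auto
  next
    case False
    hence "j < i" using ij(3) by simp
    have "of_int (int (i - j)) * x \<in> Ob" using key[OF ij(2,1) ij(4)[symmetric]] \<open>j < i\<close> by (simp add: of_nat_diff)
    thus ?thesis using that[of "i - j"] \<open>j < i\<close> ij by auto
  qed
  have "d dvd fact fN" using d(2,3) by (rule dvd_fact)
  then obtain k where k: "fact fN = d * k" by blast
  have "(fact fN :: int) = int d * int k" using k by (metis of_nat_fact of_nat_mult)
  hence "of_int (fact fN) * x = of_int (int k) * (of_int (int d) * x)" by (simp add: algebra_simps)
  thus "of_int (fact fN) * x \<in> Ob" using O_smult[OF d(1), of "int k"] by simp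
qed

end

context cub begin

lemma obasis1: "\<exists>a' b'. zbasis3 Ob 1 a' b'"
proof -
  obtain a b c where B: "zbasis3 Ob a b c" using obasis by blast
  have "1 \<in> zspan3 a b c" using B O_1 unfolding zbasis3_def by blast
  then obtain u v w where one: "1 = of_int u * a + of_int v * b + of_int w * c" unfolding zspan3_iff by blast
  define g3 where "g3 = gcd u (gcd v w)"
  have g3: "g3 = 1"
  proof -
    have "g3 \<noteq> 0"
    proof
      assume "g3 = 0"
      hence "u = 0" "v = 0" "w = 0" unfolding g3_def by auto
      with one one_ne_zero show False by simp
    qed
    obtain u1 where u1: "u = g3 * u1" unfolding g3_def by (meson gcd_dvd1 dvdE)
    obtain v1 where v1: "v = g3 * v1" unfolding g3_def by (meson gcd_dvd1 gcd_dvd2 dvd_trans dvdE)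
    obtain w1 where w1: "w = g3 * w1" unfolding g3_def by (meson gcd_dvd2 dvd_trans dvdE)
    define x where "x = of_int u1 * a + of_int v1 * b + of_int w1 * c"
    have "x \<in> zspan3 a b c" unfolding x_def zspan3_iff by blast
    hence "x \<in> Ob" using B unfolding zbasis3_def by blast
    hence "x \<in> L" using sub by blast
    moreover have "of_int g3 * x = of_int 1" unfolding x_def using one u1 v1 w1 by (simp add: algebra_simps)
    ultimately have "g3 dvd 1" using rat_integral \<open>g3 \<noteq> 0\<close> by blast
    moreover have "g3 \<ge> 0" unfolding g3_def by simp
    ultimately show ?thesis by (simp add: zdvd1_eq)
  qed
  show ?thesis
  proof (cases "gcd u v = 0")
    case True
    hence uv: "u = 0" "v = 0" by auto
    hence w: "w = 1 \<or> w = -1" using g3 unfolding g3_def by auto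
    have "zbasis3 Ob 1 a b"
      by (rule zbasis3_change[OF B, where ma=0 and mb=0 and mc=w and md=1 and me=0 and mf=0
            and mg=0 and mh=1 and mi=0 and D=w]) (use one uv w in auto)
    thus ?thesis by blast
  next
    case False
    define g where "g = gcd u v"
    obtain u' where u': "u = g * u'" unfolding g_def by (meson gcd_dvd1 dvdE)
    obtain v' where v': "v = g * v'" unfolding g_def by (meson gcd_dvd2 dvdE)
    obtain p q where pq: "p * u + q * v = g" unfolding g_def using bezout_int by blast
    have pq': "p * u' + q * v' = 1"
    proof -
      have "g * (p * u' + q * v' - 1) = 0" using pq u' v' by (simp add: algebra_simps)
      moreover have "g \<noteq> 0" using False g_def by simp
      ultimately show ?thesis by simp
    qed
    have "gcd g w = 1" using g3 unfolding g3_def g_def by (simp add: gcd.assoc)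
    then obtain be al where bal: "be * g + al * w = 1" using bezout_int[of g w] by auto
    define a' where "a' = of_int (-q) * a + of_int p * b + of_int 0 * c"
    define b' where "b' = of_int (- al * u') * a + of_int (- al * v') * b + of_int be * c"
    have D: "u * (p * be - 0 * (- al * v')) - v * ((-q) * be - 0 * (- al * u')) + w * ((-q) * (- al * v') - p * (- al * u'))
        = (be * g + al * w) * (p * u' + q * v')"
      unfolding u' v' by (simp add: algebra_simps)
    have "zbasis3 Ob 1 a' b'"
      by (rule zbasis3_change[OF B, where ma=u and mb=v and mc=w and md="-q" and me=p and mf=0
            and mg="- al * u'" and mh="- al * v'" and mi=be])
         (use one a'_def b'_def D bal pq' in auto)
    thus ?thesis by blast
  qed
qed

lemma Lbasis1: "\<exists>y2 y3. zbasis3 L 1 y2 y3"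
proof -
  obtain a' b' where B: "zbasis3 Ob 1 a' b'" using obasis1 by blast
  have Osp: "Ob = zspan3 1 a' b'" and Oind: "zindep3 1 a' b'" using B unfolding zbasis3_def by auto
  have a'O: "a' \<in> Ob" unfolding Osp zspan3_iff
    by (rule exI[of _ 0], rule exI[of _ 1], rule exI[of _ 0]) simp
  have b'O: "b' \<in> Ob" unfolding Osp zspan3_iff
    by (rule exI[of _ 0], rule exI[of _ 0], rule exI[of _ 1]) simp
  obtain N where N: "N > 0" "\<And>x. x \<in> L \<Longrightarrow> of_int N * x \<in> Ob" using denom by blast
  define P where "P = (\<lambda>k1 k2. \<exists>k0. \<exists>y\<in>L. of_int N * y = of_int k0 + of_int k1 * a' + of_int k2 * b')"
  have Padd: "P (k1 + l1) (k2 + l2)" if h1: "P k1 k2" and h2: "P l1 l2" for k1 k2 l1 l2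
  proof -
    obtain k0 y where y: "y \<in> L" "of_int N * y = of_int k0 + of_int k1 * a' + of_int k2 * b'" using h1 P_def by blast
    obtain l0 z where z: "z \<in> L" "of_int N * z = of_int l0 + of_int l1 * a' + of_int l2 * b'" using h2 P_def by blast
    have "of_int N * (y + z) = of_int (k0 + l0) + of_int (k1 + l1) * a' + of_int (k2 + l2) * b'"
      using y(2) z(2) by (simp add: algebra_simps)
    thus ?thesis unfolding P_def using L_add[OF y(1) z(1)] by blast
  qed
  have Pneg: "P (- k1) (- k2)" if h1: "P k1 k2" for k1 k2
  proof -
    obtain k0 y where y: "y \<in> L" "of_int N * y = of_int k0 + of_int k1 * a' + of_int k2 * b'" using h1 P_def by blast
    have "of_int N * (- y) = of_int (- k0) + of_int (- k1) * a' + of_int (- k2) * b'"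
      using y(2) by (simp add: algebra_simps)
    thus ?thesis unfolding P_def using L_neg[OF y(1)] by blast
  qed
  have PN0: "P N 0" unfolding P_def using sub a'O by (intro exI[of _ 0] bexI[of _ a']) auto
  have P0N: "P 0 N" unfolding P_def using sub b'O by (intro exI[of _ 0] bexI[of _ b']) auto
  obtain d1 d2 x where H: "d1 > 0" "d2 > 0" "P d1 0" "P x d2" "\<And>a b. P a b \<longleftrightarrow> (\<exists>i j. a = i*d1 + j*x \<and> b = j*d2)"
    using hnf2[of P N, OF Padd Pneg N(1) PN0 P0N] by blast
  obtain c2 y2 where y2: "y2 \<in> L" "of_int N * y2 = of_int c2 + of_int d1 * a' + of_int 0 * b'" using H(3) P_def by blast
  obtain c3 y3 where y3: "y3 \<in> L" "of_int N * y3 = of_int c3 + of_int x * a' + of_int d2 * b'" using H(4) P_def by blast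
  have sp1: "L \<subseteq> zspan3 1 y2 y3"
  proof
    fix y assume y: "y \<in> L"
    have "of_int N * y \<in> zspan3 1 a' b'" using N(2)[OF y] Osp by simp
    then obtain k0 k1 k2 where k: "of_int N * y = of_int k0 * 1 + of_int k1 * a' + of_int k2 * b'"
      unfolding zspan3_iff by blast
    hence "P k1 k2" unfolding P_def using y by auto
    then obtain i j where ij: "k1 = i*d1 + j*x" "k2 = j*d2" using H(5) by blast
    define z where "z = y - of_int i * y2 - of_int j * y3"
    have zL: "z \<in> L" unfolding z_def using y y2(1) y3(1) L_diff L_smult by blast
    have "of_int N * z = of_int N * y - of_int i * (of_int N * y2) - of_int j * (of_int N * y3)"
      unfolding z_def by (simp add: algebra_simps)
    also have "\<dots> = of_int (k0 - i * c2 - j * c3)"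
      unfolding k y2(2) y3(2) ij by (simp add: algebra_simps)
    finally have zN: "of_int N * z = of_int (k0 - i * c2 - j * c3)" .
    have "N dvd (k0 - i * c2 - j * c3)" using rat_integral[OF zL _ zN] N(1) by simp
    then obtain t where t: "k0 - i * c2 - j * c3 = N * t" by blast
    have "of_int N * (z - of_int t) = of_int N * z - of_int (N * t)" by (simp add: right_diff_distrib)
    also have "\<dots> = 0" using zN t by simp
    finally have "of_int N * (z - of_int t) = 0" .
    hence "z - of_int t = 0" using torsion[of N "z - of_int t"] N(1) by simp
    hence "z = of_int t" by simp
    hence "y = of_int t * 1 + of_int i * y2 + of_int j * y3" unfolding z_def by (simp add: algebra_simps)
    thus "y \<in> zspan3 1 y2 y3" unfolding zspan3_iff by blast
  qed
  have sp2: "zspan3 1 y2 y3 \<subseteq> L"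
    using L_lc[OF L_1 y2(1) y3(1)] unfolding zspan3_def by blast
  have ind: "zindep3 1 y2 y3" unfolding zindep3_def
  proof (intro allI impI)
    fix al be ga :: int
    assume h: "of_int al * 1 + of_int be * y2 + of_int ga * y3 = (0::'k)"
    have "of_int N * (of_int al * 1 + of_int be * y2 + of_int ga * y3) =
        of_int (al * N) + of_int be * (of_int N * y2) + of_int ga * (of_int N * y3)"
      by (simp add: algebra_simps)
    also have "\<dots> = of_int (al * N + be * c2 + ga * c3) * 1 + of_int (be * d1 + ga * x) * a' + of_int (ga * d2) * b'"
      unfolding y2(2) y3(2) by (simp add: algebra_simps)
    finally have "of_int (al * N + be * c2 + ga * c3) * 1 + of_int (be * d1 + ga * x) * a' + of_int (ga * d2) * b'
        = of_int N * (of_int al * 1 + of_int be * y2 + of_int ga * y3)" by simp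
    also have "\<dots> = 0" using h by simp
    finally have "al * N + be * c2 + ga * c3 = 0 \<and> be * d1 + ga * x = 0 \<and> ga * d2 = 0"
      using Oind unfolding zindep3_def by blast
    thus "al = 0 \<and> be = 0 \<and> ga = 0" using H(1,2) N(1) by auto
  qed
  have "zbasis3 L 1 y2 y3" unfolding zbasis3_def using sp1 sp2 ind by blast
  thus ?thesis by blast
qed

end

lemma small_mult_zero: "(d::int) > 0 \<Longrightarrow> \<bar>J * d\<bar> < d \<Longrightarrow> J = 0"
proof (rule ccontr)
  assume d: "d > 0" and l: "\<bar>J * d\<bar> < d" and J: "J \<noteq> 0"
  have "\<bar>J\<bar> \<ge> 1" using J by simp
  hence "\<bar>J\<bar> * d \<ge> 1 * d" using d by (intro mult_right_mono) auto
  thus False using l d by (simp add: abs_mult)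
qed

context cub begin

lemma smith: "\<exists>\<omega>0 \<theta>0. zbasis3 L 1 \<omega>0 \<theta>0 \<and> zbasis3 Ob 1 (of_nat fN * \<omega>0) \<theta>0"
proof -
  obtain l2 l3 where LB: "zbasis3 L 1 l2 l3" using Lbasis1 by blast
  have Lsp: "L = zspan3 1 l2 l3" and Lind: "zindep3 1 l2 l3" using LB unfolding zbasis3_def by auto
  have l2L: "l2 \<in> L" unfolding Lsp zspan3_iff by (rule exI[of _ 0], rule exI[of _ 1], rule exI[of _ 0]) simp
  have l3L: "l3 \<in> L" unfolding Lsp zspan3_iff by (rule exI[of _ 0], rule exI[of _ 0], rule exI[of _ 1]) simp
  obtain N where N: "N > 0" "\<And>x. x \<in> L \<Longrightarrow> of_int N * x \<in> Ob" using denom by blast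
  define MP where "MP = (\<lambda>k1 k2. \<exists>k0. of_int k0 + of_int k1 * l2 + of_int k2 * l3 \<in> Ob)"
  have Madd: "MP (k1 + m1) (k2 + m2)" if h1: "MP k1 k2" and h2: "MP m1 m2" for k1 k2 m1 m2
  proof -
    obtain k0 where k: "of_int k0 + of_int k1 * l2 + of_int k2 * l3 \<in> Ob" using h1 MP_def by blast
    obtain m0 where m: "of_int m0 + of_int m1 * l2 + of_int m2 * l3 \<in> Ob" using h2 MP_def by blast
    have "of_int (k0 + m0) + of_int (k1 + m1) * l2 + of_int (k2 + m2) * l3
      = (of_int k0 + of_int k1 * l2 + of_int k2 * l3) + (of_int m0 + of_int m1 * l2 + of_int m2 * l3)"
      by (simp add: algebra_simps)
    thus ?thesis unfolding MP_def using O_add[OF k m] by metis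
  qed
  have Mneg: "MP (- k1) (- k2)" if h1: "MP k1 k2" for k1 k2
  proof -
    obtain k0 where k: "of_int k0 + of_int k1 * l2 + of_int k2 * l3 \<in> Ob" using h1 MP_def by blast
    have "of_int (- k0) + of_int (- k1) * l2 + of_int (- k2) * l3 = - (of_int k0 + of_int k1 * l2 + of_int k2 * l3)"
      by (simp add: algebra_simps)
    thus ?thesis unfolding MP_def using O_neg[OF k] by metis
  qed
  have MN0: "MP N 0" unfolding MP_def using N(2)[OF l2L] by (intro exI[of _ 0]) simp
  have M0N: "MP 0 N" unfolding MP_def using N(2)[OF l3L] by (intro exI[of _ 0]) simp
  obtain d1 d2 x where H: "d1 > 0" "d2 > 0" "MP d1 0" "MP x d2" "\<And>a b. MP a b \<longleftrightarrow> (\<exists>i j. a = i*d1 + j*x \<and> b = j*d2)"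
    using hnf2[of MP N, OF Madd Mneg N(1) MN0 M0N] by blast
  have diffO: "MP (k1 - m1) (k2 - m2)" if "of_int k0 + of_int k1 * l2 + of_int k2 * l3 - (of_int m0 + of_int m1 * l2 + of_int m2 * l3) \<in> Ob"
    for k0 k1 k2 m0 m1 m2
  proof -
    have "of_int k0 + of_int k1 * l2 + of_int k2 * l3 - (of_int m0 + of_int m1 * l2 + of_int m2 * l3)
      = of_int (k0 - m0) + of_int (k1 - m1) * l2 + of_int (k2 - m2) * l3" by (simp add: algebra_simps)
    thus ?thesis using that unfolding MP_def by metis
  qed
  have Odiff: "of_int k0 + of_int k1 * l2 + of_int k2 * l3 - (of_int m0 + of_int m1 * l2 + of_int m2 * l3) \<in> Ob"
    if hM: "MP (k1 - m1) (k2 - m2)" for k0 k1 k2 m0 m1 m2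
  proof -
    obtain c where c: "of_int c + of_int (k1 - m1) * l2 + of_int (k2 - m2) * l3 \<in> Ob" using hM MP_def by blast
    have "of_int k0 + of_int k1 * l2 + of_int k2 * l3 - (of_int m0 + of_int m1 * l2 + of_int m2 * l3)
      = of_int (k0 - m0 - c) + (of_int c + of_int (k1 - m1) * l2 + of_int (k2 - m2) * l3)" by (simp add: algebra_simps)
    thus ?thesis using O_add[OF O_int c] by metis
  qed
  define phi where "phi = (\<lambda>(i::int, j::int). cos (of_int 0 + of_int i * l2 + of_int j * l3))"
  define R where "R = {0..<d1} \<times> {0..<d2}"
  have img: "phi ` R = cos ` L"
  proof
    show "phi ` R \<subseteq> cos ` L"
    proof
      fix z assume "z \<in> phi ` R"
      then obtain i j where "z = cos (of_int 0 + of_int i * l2 + of_int j * l3)" unfolding phi_def by auto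
      moreover have "of_int 0 + of_int i * l2 + of_int j * l3 \<in> L" unfolding Lsp zspan3_iff
        by (rule exI[of _ 0], rule exI[of _ i], rule exI[of _ j]) simp
      ultimately show "z \<in> cos ` L" by blast
    qed
  next
    show "cos ` L \<subseteq> phi ` R"
    proof
      fix z assume "z \<in> cos ` L"
      then obtain y where y: "y \<in> L" "z = cos y" by blast
      then obtain k0 k1 k2 where k: "y = of_int k0 * 1 + of_int k1 * l2 + of_int k2 * l3" unfolding Lsp zspan3_iff by blast
      define J j where "J = k2 div d2" and "j = k2 mod d2"
      define I i where "I = (k1 - J * x) div d1" and "i = (k1 - J * x) mod d1"
      have "k2 = J * d2 + j" unfolding J_def j_def by simp
      moreover have "k1 - J * x = I * d1 + i" unfolding I_def i_def by simp
      ultimately have "MP (k1 - i) (k2 - j)" using H(5) by (intro H(5)[THEN iffD2] exI[of _ I] exI[of _ J]) (simp add: algebra_simps)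
      hence "of_int k0 + of_int k1 * l2 + of_int k2 * l3 - (of_int 0 + of_int i * l2 + of_int j * l3) \<in> Ob" by (rule Odiff)
      hence "cos y = phi (i, j)" unfolding phi_def k using cos_eq by simp
      moreover have "(i, j) \<in> R" unfolding R_def i_def j_def using H(1,2) by simp
      ultimately show "z \<in> phi ` R" using y by blast
    qed
  qed
  have inj: "inj_on phi R"
  proof (rule inj_onI)
    fix p p' assume p: "p \<in> R" and p': "p' \<in> R" and e: "phi p = phi p'"
    obtain i j where ij: "p = (i, j)" by fastforce
    obtain i' j' where ij': "p' = (i', j')" by fastforce
    have "of_int 0 + of_int i * l2 + of_int j * l3 - (of_int 0 + of_int i' * l2 + of_int j' * l3) \<in> Ob"
      using e cos_eq unfolding phi_def ij ij' by simp
    hence "MP (i - i') (j - j')" by (rule diffO)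
    then obtain I J where IJ: "i - i' = I*d1 + J*x" "j - j' = J*d2" using H(5) by blast
    have r: "0 \<le> i" "i < d1" "0 \<le> j" "j < d2" "0 \<le> i'" "i' < d1" "0 \<le> j'" "j' < d2" using p p' ij ij' R_def by auto
    have "\<bar>J * d2\<bar> < d2" using IJ(2) r by simp
    hence J0: "J = 0" using small_mult_zero H(2) by blast
    have "\<bar>I * d1\<bar> < d1" using IJ(1) r J0 by simp
    hence "I = 0" using small_mult_zero H(1) by blast
    thus "p = p'" using IJ J0 ij ij' by simp
  qed
  have cardR: "card R = nat d1 * nat d2" unfolding R_def by (simp add: card_cartesian_product)
  have fNv: "fN = nat d1 * nat d2" using fN_cos img card_image[OF inj] cardR by simp
  define f where "f = d1 * d2"
  have ff: "(of_nat fN :: 'k) = of_int f" unfolding f_def using fNv H(1,2)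
    by (metis of_int_of_nat_eq of_nat_mult nat_mult_distrib zero_le_mult_iff less_imp_le nat_0_le)
  have cop: "gcd d1 d2 = 1"
  proof -
    define g where "g = gcd d1 d2"
    have "g * g dvd d1 * d2" unfolding g_def by (simp add: mult_dvd_mono)
    hence "int (nat g ^ 2) dvd int fN" unfolding fNv using H(1,2)
      by (simp add: power2_eq_square g_def nat_mult_distrib[symmetric])
    hence "nat g ^ 2 dvd fN" by (simp only: of_nat_dvd_iff)
    hence "nat g dvd 1" using squarefreeD[OF sqf] by blast
    thus ?thesis unfolding g_def by simp
  qed
  obtain u v where uv: "u * d1 + v * d2 = 1" using bezout_int[of d1 d2] cop by auto
  define t where "t = (1 - x) * u"
  define X where "X = x + t * d1"
  define nu where "nu = (1 - x) * v"
  have rel: "X + nu * d2 = 1"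
  proof -
    have "X + nu * d2 = x + (1 - x) * (u * d1 + v * d2)" unfolding X_def t_def nu_def by (simp add: algebra_simps)
    thus ?thesis using uv by simp
  qed
  have "MP X d2" using H(5) unfolding X_def by (intro H(5)[THEN iffD2] exI[of _ t] exI[of _ 1]) (simp add: algebra_simps)
  then obtain ct where ct: "of_int ct + of_int X * l2 + of_int d2 * l3 \<in> Ob" unfolding MP_def by blast
  define \<theta>0 where "\<theta>0 = of_int ct * 1 + of_int X * l2 + of_int d2 * l3"
  define \<omega>0 where "\<omega>0 = of_int 0 * 1 + of_int nu * l2 + of_int (-1) * l3"
  have th0O: "\<theta>0 \<in> Ob" using ct unfolding \<theta>0_def by simp
  have LB0: "zbasis3 L 1 \<omega>0 \<theta>0"
    by (rule zbasis3_change[OF LB, where ma=1 and mb=0 and mc=0 and md=0 and me=nu and mf="-1"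
          and mg=ct and mh=X and mi=d2 and D=1]) (use rel \<omega>0_def \<theta>0_def in \<open>auto simp: algebra_simps\<close>)
  have "MP (f * nu) (- f)" unfolding f_def
    by (intro H(5)[THEN iffD2] exI[of _ "d2 * nu + x"] exI[of _ "- d1"]) (simp add: algebra_simps)
  then obtain cw where cw: "of_int cw + of_int (f * nu) * l2 + of_int (- f) * l3 \<in> Ob" unfolding MP_def by blast
  have fw: "of_int f * \<omega>0 \<in> Ob"
  proof -
    have "of_int f * \<omega>0 = (of_int cw + of_int (f * nu) * l2 + of_int (- f) * l3) - of_int cw"
      unfolding \<omega>0_def by (simp add: algebra_simps)
    thus ?thesis using O_diff[OF cw O_int] by metis
  qed
  have sp1: "Ob \<subseteq> zspan3 1 (of_int f * \<omega>0) \<theta>0"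
  proof
    fix y assume yO: "y \<in> Ob"
    hence "y \<in> L" using sub by blast
    then obtain k0 k1 k2 where k: "y = of_int k0 * 1 + of_int k1 * l2 + of_int k2 * l3" unfolding Lsp zspan3_iff by blast
    have "MP k1 k2" unfolding MP_def using yO k by (intro exI[of _ k0]) simp
    then obtain i j where ij: "k1 = i*d1 + j*x" "k2 = j*d2" using H(5) by blast
    define al where "al = i - t * j"
    define be where "be = nu * k2 + k1"
    define ga where "ga = k0 - be * ct"
    have c3: "- al * f + be * d2 = k2"
    proof -
      have "- al * f + be * d2 = j * d2 * (X + nu * d2)"
        unfolding al_def be_def f_def X_def ij by (simp add: algebra_simps)
      thus ?thesis using rel ij by simp
    qed
    have c2: "al * f * nu + be * X = k1"
    proof -
      have "al * f * nu + be * X = k1 * (X + nu * d2) + nu * j * d2 * (X - t * d1 - x)"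
        unfolding al_def be_def f_def ij by (simp add: algebra_simps)
      thus ?thesis using rel unfolding X_def by simp
    qed
    have "y = of_int ga * 1 + of_int al * (of_int f * \<omega>0) + of_int be * \<theta>0"
    proof -
      have "of_int ga * 1 + of_int al * (of_int f * \<omega>0) + of_int be * \<theta>0
          = of_int (ga + be * ct) + of_int (al * f * nu + be * X) * l2 + of_int (- al * f + be * d2) * l3"
        unfolding \<omega>0_def \<theta>0_def by (simp add: algebra_simps)
      also have "\<dots> = y" unfolding c2 c3 k ga_def by simp
      finally show ?thesis by simp
    qed
    thus "y \<in> zspan3 1 (of_int f * \<omega>0) \<theta>0" unfolding zspan3_iff by blast
  qed
  have sp2: "zspan3 1 (of_int f * \<omega>0) \<theta>0 \<subseteq> Ob"
    using O_lc[OF O_1 fw th0O] unfolding zspan3_def by blast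
  have ind: "zindep3 1 (of_int f * \<omega>0) \<theta>0" unfolding zindep3_def
  proof (intro allI impI)
    fix a b c :: int
    assume "of_int a * 1 + of_int b * (of_int f * \<omega>0) + of_int c * \<theta>0 = (0::'k)"
    hence "of_int a * 1 + of_int (b * f) * \<omega>0 + of_int c * \<theta>0 = (0::'k)" by (simp add: algebra_simps)
    hence "a = 0 \<and> b * f = 0 \<and> c = 0" using LB0 unfolding zbasis3_def zindep3_def by blast
    moreover have "f \<noteq> 0" unfolding f_def using H(1,2) by simp
    ultimately show "a = 0 \<and> b = 0 \<and> c = 0" by simp
  qed
  have "zbasis3 Ob 1 (of_nat fN * \<omega>0) \<theta>0" unfolding zbasis3_def ff using sp1 sp2 ind by blast
  thus ?thesis using LB0 by blast
qed

end

definition cf :: "int \<Rightarrow> int \<Rightarrow> int \<Rightarrow> int \<Rightarrow> int \<Rightarrow> int \<Rightarrow> int" where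
  "cf t s t' s' x y = t*x^3 - s*x^2*y + t'*x*y^2 - s'*y^3"

lemma choose_mB:
  assumes f: "f \<noteq> 0" and nz: "\<not> (t = 0 \<and> s = 0 \<and> t' = 0 \<and> s' = 0)"
  shows "\<exists>m B. cf t s t' s' (f*m) 1 \<noteq> 0 \<and> cf t s t' s' (1 + B*(f*m)) B \<noteq> 0"
proof -
  have "\<exists>m. cf t s t' s' (f*m) 1 \<noteq> 0"
  proof (rule ccontr)
    assume "\<not> ?thesis"
    hence z: "cf t s t' s' (f*m) 1 = 0" for m by blast
    define a b c where "a = t*f^3" and "b = - s*f^2" and "c = t'*f"
    have g: "cf t s t' s' (f*m) 1 = a*m^3 + b*m^2 + c*m - s'" for m
      unfolding cf_def a_def b_def c_def by (simp add: algebra_simps power_mult_distrib)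
    have e0: "s' = 0" using z[of 0] g[of 0] by simp
    have e1: "a + b + c = 0" using z[of 1] g[of 1] e0 by simp
    have e2: "8*a + 4*b + 2*c = 0" using z[of 2] g[of 2] e0 by simp
    have e3: "27*a + 9*b + 3*c = 0" using z[of 3] g[of 3] e0 by simp
    have "a = 0" "b = 0" "c = 0" using e1 e2 e3 by linarith+
    hence "t = 0" "s = 0" "t' = 0" using f unfolding a_def b_def c_def by auto
    with e0 nz show False by simp
  qed
  then obtain m where m: "cf t s t' s' (f*m) 1 \<noteq> 0" by blast
  have "\<exists>B. cf t s t' s' (1 + B*(f*m)) B \<noteq> 0"
  proof (rule ccontr)
    assume "\<not> ?thesis"
    hence z: "cf t s t' s' (1 + B*(f*m)) B = 0" for B by blast
    have "cf t s t' s' (1 + 3*(f*m)) 3 - 3 * cf t s t' s' (1 + 2*(f*m)) 2 + 3 * cf t s t' s' (1 + 1*(f*m)) 1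
        - cf t s t' s' (1 + 0*(f*m)) 0 = 6 * cf t s t' s' (f*m) 1"
      unfolding cf_def by (simp add: algebra_simps power2_eq_square power3_eq_cube)
    hence "cf t s t' s' (f*m) 1 = 0" using z[of 0] z[of 1] z[of 2] z[of 3] by simp
    with m show False by simp
  qed
  with m show ?thesis by blast
qed

context cub begin

lemma assoc_rel:
  assumes ind: "zindep3 1 w th"
    and wt: "w * th = of_int n"
    and ww: "w * w = of_int r * 1 + of_int s * w + of_int t * th"
    and tt: "th * th = of_int r' * 1 + of_int s' * w + of_int t' * th"
  shows "n = t * s' \<and> r = - t * t' \<and> r' = - s * s'"
proof -
  have "of_int (s*n + t*r') * 1 + of_int (t*s') * w + of_int (r + t*t') * th = (w * w) * th"
  proof -
    have "(w * w) * th = of_int r * th + of_int s * (w * th) + of_int t * (th * th)"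
      unfolding ww by (simp add: algebra_simps)
    also have "\<dots> = of_int (s*n + t*r') * 1 + of_int (t*s') * w + of_int (r + t*t') * th"
      unfolding wt tt by (simp add: algebra_simps)
    finally show ?thesis by simp
  qed
  also have "(w * w) * th = of_int 0 * 1 + of_int n * w + of_int 0 * th"
    using wt by (simp add: algebra_simps mult.assoc[symmetric])
  finally have e1: "s*n + t*r' = 0 \<and> t*s' = n \<and> r + t*t' = 0" using zindep3_uniq[OF ind] by blast
  have "of_int (s'*r + t'*n) * 1 + of_int (r' + s'*s) * w + of_int (s'*t) * th = w * (th * th)"
  proof -
    have "w * (th * th) = of_int r' * w + of_int s' * (w * w) + of_int t' * (w * th)"
      unfolding tt by (simp add: algebra_simps)
    also have "\<dots> = of_int (s'*r + t'*n) * 1 + of_int (r' + s'*s) * w + of_int (s'*t) * th"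
      unfolding wt ww by (simp add: algebra_simps)
    finally show ?thesis by simp
  qed
  also have "w * (th * th) = of_int 0 * 1 + of_int 0 * w + of_int n * th"
    using wt by (simp add: mult.assoc[symmetric])
  finally have e2: "s'*r + t'*n = 0 \<and> r' + s'*s = 0 \<and> s'*t = n" using zindep3_uniq[OF ind] by blast
  show ?thesis using e1 e2 by (simp add: algebra_simps)
qed

lemma adjust:
  assumes LB: "zbasis3 L 1 w th" and OB: "zbasis3 Ob 1 (of_int f * w) th"
    and det: "A * D - B * C = 1" and C: "C = f * C'"
  shows "zbasis3 L 1 (of_int A * w + of_int B * th + of_int e1) (of_int C * w + of_int D * th + of_int e2)
       \<and> zbasis3 Ob 1 (of_int f * (of_int A * w + of_int B * th + of_int e1)) (of_int C * w + of_int D * th + of_int e2)"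
proof
  show "zbasis3 L 1 (of_int A * w + of_int B * th + of_int e1) (of_int C * w + of_int D * th + of_int e2)"
    by (rule zbasis3_change[OF LB, where ma=1 and mb=0 and mc=0 and md=e1 and me=A and mf=B
          and mg=e2 and mh=C and mi=D and D=1]) (use det in \<open>auto simp: algebra_simps\<close>)
  show "zbasis3 Ob 1 (of_int f * (of_int A * w + of_int B * th + of_int e1)) (of_int C * w + of_int D * th + of_int e2)"
    by (rule zbasis3_change[OF OB, where ma=1 and mb=0 and mc=0 and md="f*e1" and me=A and mf="f*B"
          and mg=e2 and mh=C' and mi=D and D=1]) (use det C in \<open>auto simp: algebra_simps\<close>)
qed

lemma sc:
  assumes LB: "zbasis3 L 1 w th" and x: "x \<in> L"
  shows "\<exists>a b c. x = of_int a * 1 + of_int b * w + of_int c * th"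
proof -
  have "x \<in> zspan3 1 w th" using LB x unfolding zbasis3_def by blast
  thus ?thesis unfolding zspan3_iff .
qed

lemma basis_in:
  assumes "zbasis3 S 1 w th" shows "1 \<in> S" "w \<in> S" "th \<in> S"
proof -
  have S: "S = zspan3 1 w th" using assms unfolding zbasis3_def by blast
  show "1 \<in> S" unfolding S zspan3_iff by (rule exI[of _ 1], rule exI[of _ 0], rule exI[of _ 0]) simp
  show "w \<in> S" unfolding S zspan3_iff by (rule exI[of _ 0], rule exI[of _ 1], rule exI[of _ 0]) simp
  show "th \<in> S" unfolding S zspan3_iff by (rule exI[of _ 0], rule exI[of _ 0], rule exI[of _ 1]) simp
qed

end

context cub begin

lemma normalize:
  assumes LB: "zbasis3 L 1 w th" and OB: "zbasis3 Ob 1 (of_int f * w) th"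
  shows "\<exists>e1 e2 n. zbasis3 L 1 (w + of_int e1) (th + of_int e2) \<and> zbasis3 Ob 1 (of_int f * (w + of_int e1)) (th + of_int e2)
     \<and> (w + of_int e1) * (th + of_int e2) = of_int n"
proof -
  have "w * th \<in> L" using basis_in[OF LB] L_mult by blast
  then obtain r3 s3 t3 where p: "w * th = of_int r3 * 1 + of_int s3 * w + of_int t3 * th" using sc[OF LB] by blast
  have ad: "zbasis3 L 1 (of_int 1 * w + of_int 0 * th + of_int (-t3)) (of_int 0 * w + of_int 1 * th + of_int (-s3))
       \<and> zbasis3 Ob 1 (of_int f * (of_int 1 * w + of_int 0 * th + of_int (-t3))) (of_int 0 * w + of_int 1 * th + of_int (-s3))"
    by (rule adjust[OF LB OB, where C'=0]) auto
  have "(w + of_int (-t3)) * (th + of_int (-s3)) = w * th - of_int s3 * w - of_int t3 * th + of_int (s3 * t3)"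
    by (simp add: algebra_simps)
  also have "\<dots> = of_int (r3 + s3 * t3)" unfolding p by (simp add: algebra_simps)
  finally show ?thesis using ad by (intro exI[of _ "-t3"] exI[of _ "-s3"] exI[of _ "r3 + s3 * t3"]) simp
qed

lemma final_basis:
  "\<exists>\<omega> \<theta> n. zbasis3 L 1 \<omega> \<theta> \<and> zbasis3 Ob 1 (of_int (int fN) * \<omega>) \<theta> \<and> \<omega> * \<theta> = of_int n \<and> n \<noteq> 0"
proof -
  define f where "f = int fN"
  have f0: "f \<noteq> 0" using fN_pos f_def by simp
  obtain \<omega>0 \<theta>0 where B0: "zbasis3 L 1 \<omega>0 \<theta>0" "zbasis3 Ob 1 (of_int f * \<omega>0) \<theta>0"
    using smith f_def by auto
  obtain e1 e2 n1 where B1: "zbasis3 L 1 (\<omega>0 + of_int e1) (\<theta>0 + of_int e2)"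
    "zbasis3 Ob 1 (of_int f * (\<omega>0 + of_int e1)) (\<theta>0 + of_int e2)" "(\<omega>0 + of_int e1) * (\<theta>0 + of_int e2) = of_int n1"
    using normalize[OF B0] by blast
  define \<omega>1 where "\<omega>1 = \<omega>0 + of_int e1"
  define \<theta>1 where "\<theta>1 = \<theta>0 + of_int e2"
  have LB1: "zbasis3 L 1 \<omega>1 \<theta>1" and OB1: "zbasis3 Ob 1 (of_int f * \<omega>1) \<theta>1" and n1: "\<omega>1 * \<theta>1 = of_int n1"
    using B1 unfolding \<omega>1_def \<theta>1_def by auto
  have ind1: "zindep3 1 \<omega>1 \<theta>1" using LB1 unfolding zbasis3_def by blast
  have "\<omega>1 * \<omega>1 \<in> L" using basis_in[OF LB1] L_mult by blast
  then obtain r s t where ww: "\<omega>1 * \<omega>1 = of_int r * 1 + of_int s * \<omega>1 + of_int t * \<theta>1" using sc[OF LB1] by blast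
  have "\<theta>1 * \<theta>1 \<in> L" using basis_in[OF LB1] L_mult by blast
  then obtain r' s' t' where tt: "\<theta>1 * \<theta>1 = of_int r' * 1 + of_int s' * \<omega>1 + of_int t' * \<theta>1" using sc[OF LB1] by blast
  have ar1: "n1 = t * s' \<and> r = - t * t' \<and> r' = - s * s'" using assoc_rel[OF ind1 n1 ww tt] .
  have nz: "\<not> (t = 0 \<and> s = 0 \<and> t' = 0 \<and> s' = 0)"
  proof
    assume z: "t = 0 \<and> s = 0 \<and> t' = 0 \<and> s' = 0"
    hence "\<omega>1 * \<omega>1 = 0" using ww ar1 by simp
    hence "\<omega>1 = 0" by (rule red)
    hence "of_int 0 * 1 + of_int 1 * \<omega>1 + of_int 0 * \<theta>1 = (0::'k)" by simp
    with ind1 show False unfolding zindep3_def by fastforce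
  qed
  obtain m B where mB: "cf t s t' s' (f*m) 1 \<noteq> 0" "cf t s t' s' (1 + B*(f*m)) B \<noteq> 0"
    using choose_mB[OF f0 nz] by blast
  define A where "A = 1 + B*(f*m)"
  define C where "C = f * m"
  have ad: "zbasis3 L 1 (of_int A * \<omega>1 + of_int B * \<theta>1 + of_int 0) (of_int C * \<omega>1 + of_int 1 * \<theta>1 + of_int 0)
     \<and> zbasis3 Ob 1 (of_int f * (of_int A * \<omega>1 + of_int B * \<theta>1 + of_int 0)) (of_int C * \<omega>1 + of_int 1 * \<theta>1 + of_int 0)"
    by (rule adjust[OF LB1 OB1, where C'=m]) (auto simp: A_def C_def algebra_simps)
  define \<omega>2 where "\<omega>2 = of_int A * \<omega>1 + of_int B * \<theta>1 + of_int 0"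
  define \<theta>2 where "\<theta>2 = of_int C * \<omega>1 + of_int 1 * \<theta>1 + of_int 0"
  have LB2: "zbasis3 L 1 \<omega>2 \<theta>2" and OB2: "zbasis3 Ob 1 (of_int f * \<omega>2) \<theta>2"
    using ad unfolding \<omega>2_def \<theta>2_def by auto
  obtain E1 E2 n where B3: "zbasis3 L 1 (\<omega>2 + of_int E1) (\<theta>2 + of_int E2)"
    "zbasis3 Ob 1 (of_int f * (\<omega>2 + of_int E1)) (\<theta>2 + of_int E2)" "(\<omega>2 + of_int E1) * (\<theta>2 + of_int E2) = of_int n"
    using normalize[OF LB2 OB2] by blast
  define \<omega> where "\<omega> = \<omega>2 + of_int E1"
  define \<theta> where "\<theta> = \<theta>2 + of_int E2"
  have LB: "zbasis3 L 1 \<omega> \<theta>" and OB: "zbasis3 Ob 1 (of_int f * \<omega>) \<theta>" and nn: "\<omega> * \<theta> = of_int n"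
    using B3 unfolding \<omega>_def \<theta>_def by auto
  have wdef: "\<omega> = of_int A * \<omega>1 + of_int B * \<theta>1 + of_int E1" unfolding \<omega>_def \<omega>2_def by simp
  have tdef: "\<theta> = of_int C * \<omega>1 + \<theta>1 + of_int E2" unfolding \<theta>_def \<theta>2_def by simp
  have ind: "zindep3 1 \<omega> \<theta>" using LB unfolding zbasis3_def by blast
  have "\<omega> * \<omega> \<in> L" using basis_in[OF LB] L_mult by blast
  then obtain R S T where WW: "\<omega> * \<omega> = of_int R * 1 + of_int S * \<omega> + of_int T * \<theta>" using sc[OF LB] by blast
  have "\<theta> * \<theta> \<in> L" using basis_in[OF LB] L_mult by blast
  then obtain R' S' T' where TT: "\<theta> * \<theta> = of_int R' * 1 + of_int S' * \<omega> + of_int T' * \<theta>" using sc[OF LB] by blast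
  have ar: "n = T * S' \<and> R = - T * T' \<and> R' = - S * S'" using assoc_rel[OF ind nn WW TT] .
  have cw: "S*A + T*C = A*A*s + B*B*s' + 2*E1*A \<and> S*B + T = A*A*t + B*B*t' + 2*E1*B"
  proof -
    have "\<omega> * \<omega> = of_int R * 1 + of_int S * \<omega> + of_int T * \<theta>" by (rule WW)
    also have "\<dots> = of_int (R + S*E1 + T*E2) * 1 + of_int (S*A + T*C) * \<omega>1 + of_int (S*B + T) * \<theta>1"
      unfolding wdef tdef by (simp add: algebra_simps)
    finally have X: "of_int (R + S*E1 + T*E2) * 1 + of_int (S*A + T*C) * \<omega>1 + of_int (S*B + T) * \<theta>1 = \<omega> * \<omega>" by simp
    have "\<omega> * \<omega> = of_int (A*A) * (\<omega>1 * \<omega>1) + of_int (2*A*B) * (\<omega>1 * \<theta>1) + of_int (B*B) * (\<theta>1 * \<theta>1)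
        + of_int (2*E1*A) * \<omega>1 + of_int (2*E1*B) * \<theta>1 + of_int (E1*E1)"
      unfolding wdef by (simp add: algebra_simps)
    also have "\<dots> = of_int (A*A*r + 2*A*B*n1 + B*B*r' + E1*E1) * 1 + of_int (A*A*s + B*B*s' + 2*E1*A) * \<omega>1
        + of_int (A*A*t + B*B*t' + 2*E1*B) * \<theta>1"
      unfolding ww tt n1 by (simp add: algebra_simps)
    finally show ?thesis using X zindep3_uniq[OF ind1] by metis
  qed
  have ct: "S'*A + T'*C = C*C*s + s' + 2*E2*C \<and> S'*B + T' = C*C*t + t' + 2*E2"
  proof -
    have "\<theta> * \<theta> = of_int R' * 1 + of_int S' * \<omega> + of_int T' * \<theta>" by (rule TT)
    also have "\<dots> = of_int (R' + S'*E1 + T'*E2) * 1 + of_int (S'*A + T'*C) * \<omega>1 + of_int (S'*B + T') * \<theta>1"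
      unfolding wdef tdef by (simp add: algebra_simps)
    finally have X: "of_int (R' + S'*E1 + T'*E2) * 1 + of_int (S'*A + T'*C) * \<omega>1 + of_int (S'*B + T') * \<theta>1 = \<theta> * \<theta>" by simp
    have "\<theta> * \<theta> = of_int (C*C) * (\<omega>1 * \<omega>1) + of_int (2*C) * (\<omega>1 * \<theta>1) + (\<theta>1 * \<theta>1)
        + of_int (2*E2*C) * \<omega>1 + of_int (2*E2) * \<theta>1 + of_int (E2*E2)"
      unfolding tdef by (simp add: algebra_simps)
    also have "\<dots> = of_int (C*C*r + 2*C*n1 + r' + E2*E2) * 1 + of_int (C*C*s + s' + 2*E2*C) * \<omega>1
        + of_int (C*C*t + t' + 2*E2) * \<theta>1"
      unfolding ww tt n1 by (simp add: algebra_simps)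
    finally show ?thesis using X zindep3_uniq[OF ind1] by metis
  qed
  have detAC: "A - B * C = 1" unfolding A_def C_def by simp
  have Tv: "T = cf t s t' s' A B"
  proof -
    have "T = T * (A - B * C)" using detAC by simp
    also have "\<dots> = A * (S*B + T) - B * (S*A + T*C)" by (simp add: algebra_simps)
    also have "\<dots> = A * (A*A*t + B*B*t' + 2*E1*B) - B * (A*A*s + B*B*s' + 2*E1*A)" using cw by simp
    also have "\<dots> = cf t s t' s' A B" unfolding cf_def by (simp add: algebra_simps power2_eq_square power3_eq_cube)
    finally show ?thesis .
  qed
  have Sv: "S' = - cf t s t' s' C 1"
  proof -
    have "S' = S' * (A - B * C)" using detAC by simp
    also have "\<dots> = (S'*A + T'*C) - C * (S'*B + T')" by (simp add: algebra_simps)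
    also have "\<dots> = (C*C*s + s' + 2*E2*C) - C * (C*C*t + t' + 2*E2)" using ct by simp
    also have "\<dots> = - cf t s t' s' C 1" unfolding cf_def by (simp add: algebra_simps power2_eq_square power3_eq_cube)
    finally show ?thesis .
  qed
  have "n \<noteq> 0" using ar Tv Sv mB unfolding A_def C_def by simp
  thus ?thesis using LB OB nn f_def by blast
qed

end

context cub begin

lemma conductor:
  assumes LB: "zbasis3 L 1 \<omega> \<theta>" and OB: "zbasis3 Ob 1 (of_int f * \<omega>) \<theta>" and nn: "\<omega> * \<theta> = of_int n"
    and f0: "f \<noteq> 0"
  shows "is_conductor L Ob (zspan3 (of_int f) (of_int f * \<omega>) \<theta>)"
proof -
  have ind: "zindep3 1 \<omega> \<theta>" using LB unfolding zbasis3_def by blast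
  have wL: "\<omega> \<in> L" and tL: "\<theta> \<in> L" using basis_in[OF LB] by auto
  have fwO: "of_int f * \<omega> \<in> Ob" and tO: "\<theta> \<in> Ob" using basis_in[OF OB] by auto
  have "\<omega> * \<omega> \<in> L" using wL L_mult by blast
  then obtain r s t where ww: "\<omega> * \<omega> = of_int r * 1 + of_int s * \<omega> + of_int t * \<theta>" using sc[OF LB] by blast
  have "\<theta> * \<theta> \<in> L" using tL L_mult by blast
  then obtain r' s' t' where tt: "\<theta> * \<theta> = of_int r' * 1 + of_int s' * \<omega> + of_int t' * \<theta>" using sc[OF LB] by blast
  have ar: "n = t * s' \<and> r = - t * t' \<and> r' = - s * s'" using assoc_rel[OF ind nn ww tt] .
  have "\<theta> * \<theta> \<in> zspan3 1 (of_int f * \<omega>) \<theta>" using O_mult[OF tO tO] OB unfolding zbasis3_def by blast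
  then obtain a b c where "\<theta> * \<theta> = of_int a * 1 + of_int b * (of_int f * \<omega>) + of_int c * \<theta>" unfolding zspan3_iff by blast
  hence "of_int r' * 1 + of_int s' * \<omega> + of_int t' * \<theta> = of_int a * 1 + of_int (b * f) * \<omega> + of_int c * \<theta>"
    using tt by (simp add: algebra_simps)
  hence s'b: "s' = b * f" using zindep3_uniq[OF ind] by blast
  define nb where "nb = t * b"
  define rb where "rb = - s * b"
  have nb: "n = f * nb" unfolding nb_def using ar s'b by simp
  have rb: "r' = f * rb" unfolding rb_def using ar s'b by simp
  define C where "C = zspan3 (of_int f) (of_int f * \<omega>) \<theta>"
  have Cmem: "x \<in> C \<longleftrightarrow> (\<exists>u v w. x = of_int (f*u) * 1 + of_int (f*v) * \<omega> + of_int w * \<theta>)" for x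
  proof
    assume "x \<in> C"
    then obtain u v w where "x = of_int u * of_int f + of_int v * (of_int f * \<omega>) + of_int w * \<theta>" unfolding C_def zspan3_iff by blast
    hence "x = of_int (f*u) * 1 + of_int (f*v) * \<omega> + of_int w * \<theta>" by (simp add: algebra_simps)
    thus "\<exists>u v w. x = of_int (f*u) * 1 + of_int (f*v) * \<omega> + of_int w * \<theta>" by blast
  next
    assume "\<exists>u v w. x = of_int (f*u) * 1 + of_int (f*v) * \<omega> + of_int w * \<theta>"
    then obtain u v w where "x = of_int (f*u) * 1 + of_int (f*v) * \<omega> + of_int w * \<theta>" by blast
    hence "x = of_int u * of_int f + of_int v * (of_int f * \<omega>) + of_int w * \<theta>" by (simp add: algebra_simps)
    thus "x \<in> C" unfolding C_def zspan3_iff by blast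
  qed
  have CL: "C \<subseteq> L"
  proof
    fix x assume "x \<in> C"
    then obtain u v w where "x = of_int (f*u) * 1 + of_int (f*v) * \<omega> + of_int w * \<theta>" using Cmem by blast
    thus "x \<in> L" using L_lc[OF L_1 wL tL, of "f*u" "f*v" w] by simp
  qed
  have CO: "C \<subseteq> Ob"
  proof
    fix x assume "x \<in> C"
    then obtain u v w where "x = of_int u * of_int f + of_int v * (of_int f * \<omega>) + of_int w * \<theta>" unfolding C_def zspan3_iff by blast
    thus "x \<in> Ob" using O_lc[OF O_int fwO tO] by simp
  qed
  have C0: "0 \<in> C" using Cmem[of 0] by (metis add.right_neutral mult_zero_left mult_zero_right of_int_0)
  have Cadd: "x + y \<in> C \<and> x - y \<in> C" if "x \<in> C" "y \<in> C" for x y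
  proof -
    obtain u v w where x: "x = of_int (f*u) * 1 + of_int (f*v) * \<omega> + of_int w * \<theta>" using Cmem \<open>x \<in> C\<close> by blast
    obtain u' v' w' where y: "y = of_int (f*u') * 1 + of_int (f*v') * \<omega> + of_int w' * \<theta>" using Cmem \<open>y \<in> C\<close> by blast
    have "x + y = of_int (f*(u+u')) * 1 + of_int (f*(v+v')) * \<omega> + of_int (w+w') * \<theta>" unfolding x y by (simp add: algebra_simps)
    moreover have "x - y = of_int (f*(u-u')) * 1 + of_int (f*(v-v')) * \<omega> + of_int (w-w') * \<theta>" unfolding x y by (simp add: algebra_simps)
    ultimately show ?thesis using Cmem by blast
  qed
  have Cmul: "y * x \<in> C" if xC: "x \<in> C" and yL: "y \<in> L" for x y
  proof -
    obtain u v w where x: "x = of_int (f*u) * 1 + of_int (f*v) * \<omega> + of_int w * \<theta>" using Cmem xC by blast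
    obtain al be ga where y: "y = of_int al * 1 + of_int be * \<omega> + of_int ga * \<theta>" using sc[OF LB yL] by blast
    have "y * x = of_int (al*f*u) + of_int (al*f*v) * \<omega> + of_int (al*w) * \<theta> + of_int (be*f*u) * \<omega>
        + of_int (be*f*v) * (\<omega> * \<omega>) + of_int (be*w) * (\<omega> * \<theta>) + of_int (ga*f*u) * \<theta>
        + of_int (ga*f*v) * (\<omega> * \<theta>) + of_int (ga*w) * (\<theta> * \<theta>)"
      unfolding x y by (simp add: algebra_simps)
    also have "\<dots> = of_int (f*(al*u + be*v*r + be*w*nb + ga*v*n + ga*w*rb)) * 1
        + of_int (f*(al*v + be*u + be*v*s + ga*w*b)) * \<omega> + of_int (al*w + be*f*v*t + ga*f*u + ga*w*t') * \<theta>"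
      unfolding ww tt nn rb nb s'b by (simp add: algebra_simps)
    finally show ?thesis using Cmem by blast
  qed
  have idl: "ideal_of L C" unfolding ideal_of_def using CL C0 Cadd Cmul by blast
  have maxi: "I \<subseteq> C" if I: "ideal_of L I" "I \<subseteq> Ob" for I
  proof
    fix x assume xI: "x \<in> I"
    hence "x \<in> Ob" using I by blast
    hence "x \<in> zspan3 1 (of_int f * \<omega>) \<theta>" using OB unfolding zbasis3_def by blast
    then obtain a b c where x: "x = of_int a * 1 + of_int b * (of_int f * \<omega>) + of_int c * \<theta>" unfolding zspan3_iff by blast
    have "\<omega> * x \<in> I" using I(1) xI wL unfolding ideal_of_def by blast
    hence "\<omega> * x \<in> zspan3 1 (of_int f * \<omega>) \<theta>" using I(2) OB unfolding zbasis3_def by blast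
    then obtain a' b' c' where wx: "\<omega> * x = of_int a' * 1 + of_int b' * (of_int f * \<omega>) + of_int c' * \<theta>" unfolding zspan3_iff by blast
    have "\<omega> * x = of_int a * \<omega> + of_int (b*f) * (\<omega> * \<omega>) + of_int c * (\<omega> * \<theta>)"
      unfolding x by (simp add: algebra_simps)
    also have "\<dots> = of_int (b*f*r + c*n) * 1 + of_int (a + b*f*s) * \<omega> + of_int (b*f*t) * \<theta>"
      unfolding ww nn by (simp add: algebra_simps)
    finally have "of_int a' * 1 + of_int (b' * f) * \<omega> + of_int c' * \<theta> = of_int (b*f*r + c*n) * 1 + of_int (a + b*f*s) * \<omega> + of_int (b*f*t) * \<theta>"
      using wx by (simp add: algebra_simps)
    hence "b' * f = a + b*f*s" using zindep3_uniq[OF ind] by blast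
    hence "a = f * (b' - b*s)" by (simp add: algebra_simps)
    hence ae: "(of_int a :: 'k) = of_int (f * (b' - b*s))" by simp
    have "x = of_int (f*(b' - b*s)) * 1 + of_int (f*b) * \<omega> + of_int c * \<theta>" unfolding x ae by (simp add: algebra_simps)
    thus "x \<in> C" using Cmem by blast
  qed
  show ?thesis unfolding is_conductor_def C_def[symmetric] using idl CO maxi by blast
qed

end

theorem proposition2p5:
  fixes scale :: "rat \<Rightarrow> 'k::comm_ring_1 \<Rightarrow> 'k"
    and \<O> :: "'k set"
  assumes "etale_cubic_algebra scale"
    and "cubic_ring \<O>"
    and "\<O> \<subseteq> maximal_order"
    and "squarefree (group_index maximal_order \<O>)"
  shows "\<exists>\<omega> \<theta>. zbasis3 maximal_order 1 \<omega> \<theta> \<and> (\<exists>n::int. \<omega> * \<theta> = of_int n) \<and>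
           (\<exists>u. \<omega> * u = 1) \<and> (\<exists>v. \<theta> * v = 1) \<and>
           \<O> = zspan3 1 (of_nat (group_index maximal_order \<O>) * \<omega>) \<theta> \<and>
           is_conductor maximal_order \<O>
             (zspan3 (of_nat (group_index maximal_order \<O>))
                     (of_nat (group_index maximal_order \<O>) * \<omega>) \<theta>)"
proof -
  interpret cub \<O>
  proof
    show "cubic_ring \<O>" "\<O> \<subseteq> maximal_order" "squarefree (group_index maximal_order \<O>)" using assms by auto
    show "\<And>n::int. n \<noteq> 0 \<Longrightarrow> \<exists>u::'k. of_int n * u = 1" using etale_inv[OF assms(1)] by blast
    show "\<And>w::'k. w * w = 0 \<Longrightarrow> w = 0" using etale_reduced[OF assms(1)] by blast
  qed
  obtain \<omega> \<theta> n where F: "zbasis3 maximal_order 1 \<omega> \<theta>" "zbasis3 \<O> 1 (of_int (int fN) * \<omega>) \<theta>"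
    "\<omega> * \<theta> = of_int n" "n \<noteq> 0"
    using final_basis by blast
  have fi: "(of_int (int fN) :: 'k) = of_nat fN" by simp
  obtain v where v: "of_int n * v = (1::'k)" using inv[OF F(4)] by blast
  have "\<omega> * (\<theta> * v) = 1" using F(3) v by (simp add: mult.assoc[symmetric])
  moreover have "\<theta> * (\<omega> * v) = 1" using F(3) v by (simp add: mult.assoc[symmetric] mult.commute)
  moreover have "\<O> = zspan3 1 (of_nat fN * \<omega>) \<theta>" using F(2) unfolding zbasis3_def fi by blast
  moreover have "is_conductor maximal_order \<O> (zspan3 (of_nat fN) (of_nat fN * \<omega>) \<theta>)"
    using conductor[OF F(1) F(2) F(3)] fN_pos unfolding fi by simp
  ultimately show ?thesis using F(1) F(3) by blast
qed


end
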